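(* For every $k\in\mathbb{N}$ there exists a network with $O(k)$ vertices and $O(k)$ edges, a single commodity, a single externality class, and edge costs of the form $c^\lambda_e(x_e)=\tau_e(x_e)+g_e\lambda$ with affine travel times $\tau_e$ and constant externality factors $g_e\ge0$, such that the function $\lambda\mapsto x(\lambda)$ mapping $\lambda>0$ to the Wardrop equilibrium in this network has at least $2^{k+1}$ breakpoints.
   Context: A single commodity with source $s$, sink $t$ and demand $d>0$ routes flow in a directed graph $G=(V,E)$; for a price $\lambda\ge0$ each path $p$ has cost $\sum_{e\in p}c^\lambda_e(x_e)$ where $x_e$ is the edge load. A Wardrop equilibrium for $\lambda$ is a feasible $s$–$t$ flow of value $d$ in which only minimum-cost paths carry flow; $x(\lambda)$ denotes the equilibrium (edge flows). A breakpoint is a point where $\lambda\mapsto x(\lambda)$ changes from one affine piece to another. *)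

theory Defs
  imports Complex_Main
begin

text \<open>Edge cost for price lam: c_e(x_e) = ta e * x_e + tb e + gf e * lam, i.e. affine travel
  time tau_e(x) = ta e * x + tb e plus constant externality factor gf e times lam.\<close>

record network =
  verts :: "nat set"
  edges :: "nat set"
  etail :: "nat \<Rightarrow> nat"
  ehead :: "nat \<Rightarrow> nat"
  src   :: nat
  snk   :: nat
  dem   :: real
  ta    :: "nat \<Rightarrow> real"
  tb    :: "nat \<Rightarrow> real"
  gf    :: "nat \<Rightarrow> real"

definition valid_network :: "network \<Rightarrow> bool" where
  "valid_network N \<longleftrightarrow>
     finite (verts N) \<and> finite (edges N) \<and>
     (\<forall>e\<in>edges N. etail N e \<in> verts N \<and> ehead N e \<in> verts N) \<and>
     src N \<in> verts N \<and> snk N \<in> verts N \<and> src N \<noteq> snk N \<and> dem N > 0 \<and>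
     (\<forall>e\<in>edges N. ta N e \<ge> 0 \<and> tb N e \<ge> 0 \<and> gf N e \<ge> 0)"

definition is_st_path :: "network \<Rightarrow> nat list \<Rightarrow> bool" where
  "is_st_path N p \<longleftrightarrow>
     p \<noteq> [] \<and> set p \<subseteq> edges N \<and>
     etail N (hd p) = src N \<and> ehead N (last p) = snk N \<and>
     (\<forall>i. Suc i < length p \<longrightarrow> ehead N (p ! i) = etail N (p ! Suc i)) \<and>
     distinct (etail N (hd p) # map (ehead N) p)"

definition st_paths :: "network \<Rightarrow> nat list set" where
  "st_paths N = {p. is_st_path N p}"

definition edge_cost :: "network \<Rightarrow> real \<Rightarrow> (nat \<Rightarrow> real) \<Rightarrow> nat \<Rightarrow> real" where
  "edge_cost N lam x e = ta N e * x e + tb N e + gf N e * lam"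

definition path_cost :: "network \<Rightarrow> real \<Rightarrow> (nat \<Rightarrow> real) \<Rightarrow> nat list \<Rightarrow> real" where
  "path_cost N lam x p = (\<Sum>e\<leftarrow>p. edge_cost N lam x e)"

definition wardrop_eq :: "network \<Rightarrow> real \<Rightarrow> (nat \<Rightarrow> real) \<Rightarrow> bool" where
  "wardrop_eq N lam x \<longleftrightarrow>
     (\<exists>f :: nat list \<Rightarrow> real.
        (\<forall>p\<in>st_paths N. f p \<ge> 0) \<and>
        (\<Sum>p\<in>st_paths N. f p) = dem N \<and>
        (\<forall>e. x e = (\<Sum>p\<in>{p\<in>st_paths N. e \<in> set p}. f p)) \<and>
        (\<forall>p\<in>st_paths N. f p > 0 \<longrightarrow>
            (\<forall>q\<in>st_paths N. path_cost N lam x p \<le> path_cost N lam x q)))"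

definition breakpoint :: "network \<Rightarrow> (real \<Rightarrow> nat \<Rightarrow> real) \<Rightarrow> real \<Rightarrow> bool" where
  "breakpoint N x lam0 \<longleftrightarrow> lam0 > 0 \<and>
     \<not> (\<exists>\<epsilon>>0. \<exists>p q :: nat \<Rightarrow> real. \<forall>lam. \<bar>lam - lam0\<bar> < \<epsilon> \<longrightarrow>
            (\<forall>e\<in>edges N. x lam e = p e + q e * lam))"

end

theory Submission
  imports Defs
begin


lemma st_path_distinct: "is_st_path N p \<Longrightarrow> distinct p"
  unfolding is_st_path_def by (auto dest: distinct_map[THEN iffD1])

lemma finite_st_paths: "valid_network N \<Longrightarrow> finite (st_paths N)"
proof -
  assume v: "valid_network N"
  have "st_paths N \<subseteq> {xs. set xs \<subseteq> edges N \<and> distinct xs}"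
  proof
    fix p assume "p \<in> st_paths N"
    hence h: "is_st_path N p" by (simp add: st_paths_def)
    from st_path_distinct[OF h] h show "p \<in> {xs. set xs \<subseteq> edges N \<and> distinct xs}"
      by (simp add: is_st_path_def)
  qed
  moreover have "finite {xs. set xs \<subseteq> edges N \<and> distinct xs}"
    using v by (intro finite_subset_distinct) (simp add: valid_network_def)
  ultimately show ?thesis by (rule finite_subset)
qed

lemma telescope:
  "successively (\<lambda>a b. hh a = tt b) p \<Longrightarrow> p \<noteq> [] \<Longrightarrow>
   (\<Sum>e\<leftarrow>p. (pt (hh e) - pt (tt e)::real)) = pt (hh (last p)) - pt (tt (hd p))"
proof (induction p rule: induct_list012)
  case (3 x y zs)
  then show ?case by auto
qed auto

lemma chain_succ: "is_st_path N p \<Longrightarrow> successively (\<lambda>a b. ehead N a = etail N b) p"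
  unfolding is_st_path_def successively_conv_nth by auto

lemma path_cost_ge:
  assumes "is_st_path N p"
    and "\<forall>e\<in>edges N. pt (ehead N e) \<le> pt (etail N e) + edge_cost N lam x e"
  shows "pt (snk N) - pt (src N) \<le> path_cost N lam x p"
proof -
  have "pt (snk N) - pt (src N) = (\<Sum>e\<leftarrow>p. pt (ehead N e) - pt (etail N e))"
    using telescope[OF chain_succ[OF assms(1)]] assms(1) by (simp add: is_st_path_def)
  also have "\<dots> \<le> (\<Sum>e\<leftarrow>p. edge_cost N lam x e)"
    apply (rule sum_list_mono) using assms unfolding is_st_path_def by (smt (verit) subsetD)
  finally show ?thesis by (simp add: path_cost_def)
qed

lemma path_cost_eq:
  assumes "is_st_path N p"
    and "\<forall>e\<in>set p. pt (ehead N e) = pt (etail N e) + edge_cost N lam x e"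
  shows "path_cost N lam x p = pt (snk N) - pt (src N)"
proof -
  have "pt (snk N) - pt (src N) = (\<Sum>e\<leftarrow>p. pt (ehead N e) - pt (etail N e))"
    using telescope[OF chain_succ[OF assms(1)]] assms(1) by (simp add: is_st_path_def)
  also have "\<dots> = (\<Sum>e\<leftarrow>p. edge_cost N lam x e)"
    apply (rule arg_cong[where f=sum_list], rule map_cong) using assms by auto
  finally show ?thesis by (simp add: path_cost_def)
qed

lemma certificate:
  assumes v: "valid_network N"
    and P: "finite P" "P \<subseteq> st_paths N"
    and f0: "\<forall>p. p \<notin> P \<longrightarrow> f p = 0" and fnn: "\<forall>p. 0 \<le> f p"
    and fs: "sum f P = dem N"
    and xf: "\<forall>e. x e = (\<Sum>p\<in>P. if e \<in> set p then f p else 0)"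
    and feas: "\<forall>e\<in>edges N. pt (ehead N e) \<le> pt (etail N e) + edge_cost N lam x e"
    and tight: "\<forall>e\<in>edges N. x e > 0 \<longrightarrow> pt (ehead N e) = pt (etail N e) + edge_cost N lam x e"
  shows "wardrop_eq N lam x"
  unfolding wardrop_eq_def
proof (intro exI conjI ballI allI impI)
  have fin: "finite (st_paths N)" using finite_st_paths[OF v] .
  show "0 \<le> f p" for p using fnn by auto
  show "sum f (st_paths N) = dem N"
    using fs sum.mono_neutral_right[OF fin P(2), of f] f0 by auto
  show "x e = sum f {p \<in> st_paths N. e \<in> set p}" for e
  proof -
    have "sum f {p \<in> st_paths N. e \<in> set p} = (\<Sum>p\<in>st_paths N. if e \<in> set p then f p else 0)"
      using fin by (simp add: sum.inter_filter)
    also have "\<dots> = (\<Sum>p\<in>P. if e \<in> set p then f p else 0)"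
      using sum.mono_neutral_right[OF fin P(2), of "\<lambda>p. if e \<in> set p then f p else 0"] f0 by auto
    finally show ?thesis using xf by simp
  qed
  fix p q assume p: "p \<in> st_paths N" and fp: "0 < f p" and q: "q \<in> st_paths N"
  have pP: "p \<in> P" using f0 fp by force
  have "\<forall>e\<in>set p. pt (ehead N e) = pt (etail N e) + edge_cost N lam x e"
  proof
    fix e assume e: "e \<in> set p"
    have "f p = (\<Sum>p'\<in>{p}. if e \<in> set p' then f p' else 0)" using e by simp
    also have "\<dots> \<le> (\<Sum>p'\<in>P. if e \<in> set p' then f p' else 0)"
      by (rule sum_mono2) (use P pP fnn in auto)
    finally have "x e > 0" using xf fp by simp
    moreover have "e \<in> edges N" using p e by (auto simp: st_paths_def is_st_path_def)
    ultimately show "pt (ehead N e) = pt (etail N e) + edge_cost N lam x e" using tight by auto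
  qed
  hence "path_cost N lam x p = pt (snk N) - pt (src N)"
    using p path_cost_eq by (auto simp: st_paths_def)
  also have "\<dots> \<le> path_cost N lam x q" using path_cost_ge q feas by (auto simp: st_paths_def)
  finally show "path_cost N lam x p \<le> path_cost N lam x q" .
qed

lemma flow_cost_sum:
  fixes h :: "nat list \<Rightarrow> real" and w y :: "nat \<Rightarrow> real"
  assumes fin: "finite S" "finite E" and SE: "\<forall>p\<in>S. distinct p \<and> set p \<subseteq> E"
    and y: "\<forall>e. y e = sum h {p\<in>S. e \<in> set p}"
  shows "(\<Sum>e\<in>E. w e * y e) = (\<Sum>p\<in>S. h p * (\<Sum>e\<leftarrow>p. w e))"
proof -
  have "(\<Sum>e\<in>E. w e * y e) = (\<Sum>e\<in>E. \<Sum>p\<in>S. if e \<in> set p then w e * h p else 0)"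
    using fin y by (simp add: sum.inter_filter sum_distrib_left if_distrib cong: if_cong)
  also have "\<dots> = (\<Sum>p\<in>S. \<Sum>e\<in>E. if e \<in> set p then w e * h p else 0)"
    by (rule sum.swap)
  also have "\<dots> = (\<Sum>p\<in>S. \<Sum>e\<in>set p. w e * h p)"
  proof (rule sum.cong[OF refl])
    fix p assume "p \<in> S"
    hence "set p \<subseteq> E" using SE by auto
    hence "{e\<in>E. e \<in> set p} = set p" by auto
    thus "(\<Sum>e\<in>E. if e \<in> set p then w e * h p else 0) = (\<Sum>e\<in>set p. w e * h p)"
      using fin by (simp add: sum.inter_filter[symmetric])
  qed
  also have "\<dots> = (\<Sum>p\<in>S. h p * (\<Sum>e\<leftarrow>p. w e))"
    using SE by (auto simp: sum_list_distinct_conv_sum_set sum_distrib_left mult.commute intro!: sum.cong)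
  finally show ?thesis .
qed

lemma vi_half:
  assumes v: "valid_network N" and wx: "wardrop_eq N lam x" and wy: "wardrop_eq N lam y"
  shows "(\<Sum>e\<in>edges N. edge_cost N lam x e * x e) \<le> (\<Sum>e\<in>edges N. edge_cost N lam x e * y e)"
proof -
  let ?S = "st_paths N"
  have finS: "finite ?S" using finite_st_paths[OF v] .
  have finE: "finite (edges N)" using v by (simp add: valid_network_def)
  have SE: "\<forall>p\<in>?S. distinct p \<and> set p \<subseteq> edges N"
    using st_path_distinct by (auto simp: st_paths_def is_st_path_def)
  obtain f where f0: "\<forall>p\<in>?S. 0 \<le> f p" and fs: "sum f ?S = dem N"
    and fx: "\<forall>e. x e = sum f {p\<in>?S. e \<in> set p}"
    and fmin: "\<forall>p\<in>?S. f p > 0 \<longrightarrow> (\<forall>q\<in>?S. path_cost N lam x p \<le> path_cost N lam x q)"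
    using wx unfolding wardrop_eq_def by blast
  obtain h where h0: "\<forall>p\<in>?S. 0 \<le> h p" and hs: "sum h ?S = dem N"
    and hy: "\<forall>e. y e = sum h {p\<in>?S. e \<in> set p}"
    using wy unfolding wardrop_eq_def by blast
  have "dem N > 0" using v by (simp add: valid_network_def)
  then obtain p0 where p0: "p0 \<in> ?S" "f p0 > 0"
    using fs f0 by (metis not_less sum_nonpos)
  define m where "m = path_cost N lam x p0"
  have mle: "\<forall>q\<in>?S. m \<le> path_cost N lam x q" using fmin p0 m_def by auto
  have feq: "\<forall>p\<in>?S. f p * path_cost N lam x p = f p * m"
  proof
    fix p assume p: "p \<in> ?S"
    show "f p * path_cost N lam x p = f p * m"
    proof (cases "f p > 0")
      case True
      hence "path_cost N lam x p \<le> m" using fmin p p0 m_def by auto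
      with mle p show ?thesis by (metis order_antisym)
    next
      case False
      hence "f p = 0" using f0 p by force
      thus ?thesis by simp
    qed
  qed
  have "(\<Sum>e\<in>edges N. edge_cost N lam x e * x e) = (\<Sum>p\<in>?S. f p * path_cost N lam x p)"
    using flow_cost_sum[OF finS finE SE fx] by (simp add: path_cost_def)
  also have "\<dots> = (\<Sum>p\<in>?S. f p * m)" using feq by (auto intro: sum.cong)
  also have "\<dots> = m * dem N" using fs by (simp add: sum_distrib_right[symmetric])
  also have "\<dots> = (\<Sum>p\<in>?S. h p * m)" using hs by (simp add: sum_distrib_right[symmetric])
  also have "\<dots> \<le> (\<Sum>p\<in>?S. h p * path_cost N lam x p)"
    by (rule sum_mono) (use h0 mle in \<open>auto intro: mult_left_mono\<close>)
  also have "\<dots> = (\<Sum>e\<in>edges N. edge_cost N lam x e * y e)"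
    using flow_cost_sum[OF finS finE SE hy] by (simp add: path_cost_def)
  finally show ?thesis .
qed

lemma wardrop_unique:
  assumes v: "valid_network N" and pos: "\<forall>e\<in>edges N. ta N e > 0"
    and wx: "wardrop_eq N lam x" and wy: "wardrop_eq N lam y"
  shows "\<forall>e\<in>edges N. y e = x e"
proof -
  have finE: "finite (edges N)" using v by (simp add: valid_network_def)
  have 1: "(\<Sum>e\<in>edges N. edge_cost N lam x e * x e) \<le> (\<Sum>e\<in>edges N. edge_cost N lam x e * y e)"
    using vi_half[OF v wx wy] .
  have 2: "(\<Sum>e\<in>edges N. edge_cost N lam y e * y e) \<le> (\<Sum>e\<in>edges N. edge_cost N lam y e * x e)"
    using vi_half[OF v wy wx] .
  have eq: "(\<Sum>e\<in>edges N. ta N e * (x e - y e)^2) =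
     (\<Sum>e\<in>edges N. edge_cost N lam x e * x e) - (\<Sum>e\<in>edges N. edge_cost N lam x e * y e)
     + ((\<Sum>e\<in>edges N. edge_cost N lam y e * y e) - (\<Sum>e\<in>edges N. edge_cost N lam y e * x e))"
    by (simp add: sum_subtractf[symmetric] sum.distrib[symmetric] edge_cost_def power2_eq_square algebra_simps)
  have le: "(\<Sum>e\<in>edges N. ta N e * (x e - y e)^2) \<le> 0" using 1 2 eq by linarith
  have nn: "\<forall>e\<in>edges N. 0 \<le> ta N e * (x e - y e)^2" using pos by (auto intro: less_imp_le)
  have "\<forall>e\<in>edges N. ta N e * (x e - y e)^2 = 0"
    using le nn sum_nonneg_eq_0_iff[OF finE, of "\<lambda>e. ta N e * (x e - y e)^2"]
    by (metis (no_types, lifting) antisym sum_nonneg)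
  thus ?thesis using pos by (metis less_irrefl mult_eq_0_iff power_eq_0_iff right_minus_eq)
qed



definition aff :: "nat set \<Rightarrow> (real \<Rightarrow> nat \<Rightarrow> real) \<Rightarrow> real \<Rightarrow> bool" where
  "aff E Y l0 \<longleftrightarrow> (\<exists>\<epsilon>>0. \<exists>p q :: nat \<Rightarrow> real. \<forall>l. \<bar>l - l0\<bar> < \<epsilon> \<longrightarrow> (\<forall>e\<in>E. Y l e = p e + q e * l))"

lemma breakpoint_aff: "breakpoint N x l \<longleftrightarrow> l > 0 \<and> \<not> aff (edges N) x l"
  unfolding breakpoint_def aff_def by blast

lemma aff_mono: "aff E Y l0 \<Longrightarrow> E' \<subseteq> E \<Longrightarrow> aff E' Y l0"
  unfolding aff_def by blast

lemma transfer:
  assumes a: "aff E Y l0" and sub: "E' \<subseteq> E"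
    and rel: "\<forall>l. \<bar>l - l0\<bar> < \<eta> \<longrightarrow> (\<forall>e\<in>E'. Y l e = Z (\<phi> l) e)"
    and phiaff: "\<And>\<epsilon> p q. (\<forall>l. \<bar>l - l0\<bar> < \<epsilon> \<longrightarrow> (\<forall>e\<in>E. Y l e = p e + q e * l)) \<Longrightarrow>
                    (\<exists>\<alpha> \<beta>. \<forall>l. \<bar>l - l0\<bar> < \<epsilon> \<longrightarrow> \<phi> l = \<alpha> + \<beta> * l)"
    and eta: "\<eta> > 0" and inj: "inj_on \<phi> {l. \<bar>l - l0\<bar> < \<eta>}"
  shows "aff E' Z (\<phi> l0)"
proof -
  obtain \<epsilon> p q where e: "\<epsilon> > 0" and pq: "\<forall>l. \<bar>l - l0\<bar> < \<epsilon> \<longrightarrow> (\<forall>e\<in>E. Y l e = p e + q e * l)"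
    using a unfolding aff_def by blast
  define \<epsilon>' where "\<epsilon>' = min \<epsilon> \<eta>"
  have e': "\<epsilon>' > 0" using e eta by (simp add: \<epsilon>'_def)
  have pq': "\<forall>l. \<bar>l - l0\<bar> < \<epsilon>' \<longrightarrow> (\<forall>e\<in>E. Y l e = p e + q e * l)"
    using pq by (simp add: \<epsilon>'_def)
  obtain \<alpha> \<beta> where ab: "\<forall>l. \<bar>l - l0\<bar> < \<epsilon>' \<longrightarrow> \<phi> l = \<alpha> + \<beta> * l"
    using phiaff[OF pq'] by blast
  have bnz: "\<beta> \<noteq> 0"
  proof
    assume b0: "\<beta> = 0"
    have "\<phi> l0 = \<phi> (l0 + \<epsilon>'/2)" using ab b0 e' by simp
    moreover have "l0 \<in> {l. \<bar>l - l0\<bar> < \<eta>}" "l0 + \<epsilon>'/2 \<in> {l. \<bar>l - l0\<bar> < \<eta>}"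
      using e' eta by (auto simp: \<epsilon>'_def)
    ultimately have "l0 = l0 + \<epsilon>'/2" using inj by (auto dest: inj_onD)
    thus False using e' by simp
  qed
  have phil0: "\<phi> l0 = \<alpha> + \<beta> * l0" using ab e' by simp
  have key: "\<forall>m. \<bar>m - \<phi> l0\<bar> < \<bar>\<beta>\<bar> * \<epsilon>' \<longrightarrow> (\<forall>e\<in>E'. Z m e = (p e - q e * \<alpha> / \<beta>) + (q e / \<beta>) * m)"
  proof (intro allI impI ballI)
    fix m e assume m: "\<bar>m - \<phi> l0\<bar> < \<bar>\<beta>\<bar> * \<epsilon>'" and eE: "e \<in> E'"
    define l where "l = (m - \<alpha>) / \<beta>"
    have "l - l0 = (m - \<phi> l0) / \<beta>" using phil0 bnz by (simp add: l_def field_simps)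
    hence "\<bar>l - l0\<bar> = \<bar>m - \<phi> l0\<bar> / \<bar>\<beta>\<bar>" by (simp add: abs_divide)
    also have "\<dots> < \<epsilon>'" using m bnz by (simp add: divide_less_eq mult.commute)
    finally have ll: "\<bar>l - l0\<bar> < \<epsilon>'" .
    have "\<phi> l = m" using ab ll bnz by (simp add: l_def)
    hence "Z m e = Y l e" using rel ll eE by (metis \<epsilon>'_def min_less_iff_conj)
    also have "\<dots> = p e + q e * l" using pq' ll eE sub by auto
    also have "\<dots> = (p e - q e * \<alpha> / \<beta>) + (q e / \<beta>) * m" using bnz by (simp add: l_def field_simps)
    finally show "Z m e = (p e - q e * \<alpha> / \<beta>) + (q e / \<beta>) * m" .
  qed
  have pos: "0 < \<bar>\<beta>\<bar> * \<epsilon>'" using bnz e' by simp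
  show ?thesis unfolding aff_def
    apply (rule exI[of _ "\<bar>\<beta>\<bar> * \<epsilon>'"])
    apply (rule conjI[OF pos])
    apply (rule exI[of _ "\<lambda>e. p e - q e * \<alpha> / \<beta>"])
    apply (rule exI[of _ "\<lambda>e. q e / \<beta>"])
    using key by simp
qed



lemma lip_cont:
  fixes c :: "real \<Rightarrow> real"
  assumes L: "\<forall>x y. 0 \<le> x \<longrightarrow> 0 \<le> y \<longrightarrow> \<bar>c x - c y\<bar> \<le> L * \<bar>x - y\<bar>"
  shows "continuous_on {0..} c"
  unfolding continuous_on_def
proof (intro ballI)
  fix x :: real assume x: "x \<in> {0..}"
  show "(c \<longlongrightarrow> c x) (at x within {0..})"
    unfolding tendsto_iff eventually_at
  proof (intro allI impI)
    fix e :: real assume e: "e > 0"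
    have Lp: "\<bar>L\<bar> + 1 > 0" by simp
    show "\<exists>d>0. \<forall>y\<in>{0..}. y \<noteq> x \<and> dist y x < d \<longrightarrow> dist (c y) (c x) < e"
    proof (intro exI[of _ "e / (\<bar>L\<bar> + 1)"] conjI ballI impI)
      show "0 < e / (\<bar>L\<bar> + 1)" using e by simp
      fix y :: real assume y: "y \<in> {0..}" and h: "y \<noteq> x \<and> dist y x < e / (\<bar>L\<bar> + 1)"
      have "dist (c y) (c x) \<le> L * \<bar>y - x\<bar>" using L x y by (simp add: dist_real_def)
      also have "\<dots> \<le> \<bar>L\<bar> * \<bar>y - x\<bar>" by (simp add: mult_right_mono)
      also have "\<dots> \<le> \<bar>L\<bar> * (e / (\<bar>L\<bar> + 1))" using h by (intro mult_left_mono) (auto simp: dist_real_def)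
      also have "\<dots> < e" using e Lp by (simp add: field_simps)
      finally show "dist (c y) (c x) < e" .
    qed
  qed
qed

lemma solve_mono:
  fixes h :: "real \<Rightarrow> real"
  assumes cont: "continuous_on {0..} h" and sm: "\<forall>x y. 0 \<le> x \<longrightarrow> x < y \<longrightarrow> h x < h y"
    and y: "h 0 \<le> y" "y \<le> h M" and M: "0 \<le> M"
  shows "0 \<le> (THE t. 0 \<le> t \<and> h t = y) \<and> h (THE t. 0 \<le> t \<and> h t = y) = y"
proof -
  have "continuous_on {0..M} h" using cont by (rule continuous_on_subset) auto
  then obtain t where t: "0 \<le> t" "t \<le> M" "h t = y" using IVT'[of h 0 y M] y M by auto
  have "\<exists>!t. 0 \<le> t \<and> h t = y"
  proof (rule ex1I[of _ t])
    show "0 \<le> t \<and> h t = y" using t by simp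
    fix s assume s: "0 \<le> s \<and> h s = y"
    show "s = t"
    proof (rule ccontr)
      assume "s \<noteq> t"
      hence "s < t \<or> t < s" by auto
      thus False using sm s t by (metis less_irrefl)
    qed
  qed
  thus ?thesis by (rule theI')
qed

lemma solve_unique:
  fixes h :: "real \<Rightarrow> real"
  assumes sm: "\<forall>x y. 0 \<le> x \<longrightarrow> x < y \<longrightarrow> h x < h y"
    and "0 \<le> s" "0 \<le> t" "h s = h t"
  shows "s = t"
  using assms by (metis linorder_neqE_linordered_idom less_irrefl)

definition dstar :: "(real \<Rightarrow> real) \<Rightarrow> real \<Rightarrow> real" where
  "dstar c b = (THE d. 0 \<le> d \<and> 2*d + c d = b)"
definition inv2 :: "(real \<Rightarrow> real) \<Rightarrow> real \<Rightarrow> real \<Rightarrow> real" where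
  "inv2 c b D = (THE t. 0 \<le> t \<and> 3*t + 2*c t = 2*b - D)"
definition del :: "(real \<Rightarrow> real) \<Rightarrow> real \<Rightarrow> real \<Rightarrow> real" where
  "del c b D = (if 2*D + c D \<le> b then D else if D < 2*b then inv2 c b D else 0)"
definition Cn :: "(real \<Rightarrow> real) \<Rightarrow> real \<Rightarrow> real \<Rightarrow> real" where
  "Cn c b D = (if 2*D + c D \<le> b then 4*D + c D else 3*D/2 + del c b D / 2 + b)"
definition dlam :: "(real \<Rightarrow> real) \<Rightarrow> real \<Rightarrow> real \<Rightarrow> real" where
  "dlam c Dt l = (if l < Dt then (THE d. 0 \<le> d \<and> 2*d + c d = Dt - l) else 0)"

context
  fixes c :: "real \<Rightarrow> real" and b :: real
  assumes c0: "c 0 = 0" and mono: "\<forall>x y. 0 \<le> x \<longrightarrow> x \<le> y \<longrightarrow> c x \<le> c y"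
    and cont: "continuous_on {0..} c" and bpos: "b > 0"
begin

lemma cnn: "0 \<le> x \<Longrightarrow> 0 \<le> c x"
  using mono c0 by (metis order_refl)

lemma sm2: "\<forall>x y. 0 \<le> x \<longrightarrow> x < y \<longrightarrow> 2*x + c x < 2*y + c y"
  using mono by (smt (verit))
lemma sm3: "\<forall>x y. 0 \<le> x \<longrightarrow> x < y \<longrightarrow> 3*x + 2*c x < 3*y + 2*c y"
  using mono by (smt (verit))
lemma cont2: "continuous_on {0..} (\<lambda>x. 2*x + c x)"
  by (intro continuous_intros cont)
lemma cont3: "continuous_on {0..} (\<lambda>x. 3*x + 2*c x)"
  by (intro continuous_intros cont)

lemma dstar_prop: "0 \<le> dstar c b \<and> 2 * dstar c b + c (dstar c b) = b"
  unfolding dstar_def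
  apply (rule solve_mono[OF cont2 sm2, of b "b/2"])
  using c0 bpos cnn[of "b/2"] by auto

lemma dstar_pos: "0 < dstar c b"
  using dstar_prop c0 bpos by (metis add.right_neutral less_eq_real_def mult_zero_right)

lemma dstar_eq: "2 * dstar c b + c (dstar c b) = b"
  using dstar_prop by simp

lemma phase1_iff: "0 \<le> D \<Longrightarrow> (2*D + c D \<le> b) \<longleftrightarrow> D \<le> dstar c b"
  using sm2 dstar_prop by (smt (verit))

lemma inv2_prop: "0 \<le> D \<Longrightarrow> D \<le> 2*b \<Longrightarrow> 0 \<le> inv2 c b D \<and> 3 * inv2 c b D + 2 * c (inv2 c b D) = 2*b - D"
  unfolding inv2_def
  apply (rule solve_mono[OF cont3 sm3, of _ b])
  using c0 bpos cnn[of b] by auto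

lemma del_lo: "0 \<le> D \<Longrightarrow> D \<le> dstar c b \<Longrightarrow> del c b D = D"
  using phase1_iff by (simp add: del_def)

lemma del_hi: "2*b \<le> D \<Longrightarrow> del c b D = 0"
proof -
  assume D: "2*b \<le> D"
  have "c D \<ge> 0" using cnn D bpos by simp
  hence "\<not> (2*D + c D \<le> b)" using D bpos by simp
  thus ?thesis using D by (simp add: del_def)
qed

lemma del_mid: "dstar c b \<le> D \<Longrightarrow> D \<le> 2*b \<Longrightarrow> 0 \<le> del c b D \<and> 3 * del c b D + 2 * c (del c b D) = 2*b - D"
proof -
  assume D1: "dstar c b \<le> D" and D2: "D \<le> 2*b"
  have D0: "0 \<le> D" using D1 dstar_pos by simp
  show ?thesis
  proof (cases "D = dstar c b")
    case True
    thus ?thesis using del_lo[OF D0] dstar_prop by simp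
  next
    case False
    hence "dstar c b < D" using D1 by simp
    hence np: "\<not> (2*D + c D \<le> b)" using phase1_iff[OF D0] by simp
    show ?thesis
    proof (cases "D < 2*b")
      case True
      thus ?thesis using np inv2_prop[OF D0 D2] by (simp add: del_def)
    next
      case False
      hence "D = 2*b" using D2 by simp
      thus ?thesis using del_hi c0 by simp
    qed
  qed
qed

lemma del_le_dstar: "dstar c b \<le> D \<Longrightarrow> D \<le> 2*b \<Longrightarrow> del c b D \<le> dstar c b"
proof -
  assume D1: "dstar c b \<le> D" and D2: "D \<le> 2*b"
  have m: "0 \<le> del c b D \<and> 3 * del c b D + 2 * c (del c b D) = 2*b - D" using del_mid[OF D1 D2] .
  show ?thesis
  proof (rule ccontr)
    assume "\<not> del c b D \<le> dstar c b"
    hence "3 * dstar c b + 2 * c (dstar c b) < 3 * del c b D + 2 * c (del c b D)"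
      using sm3 dstar_prop by auto
    thus False using m dstar_eq D1 by linarith
  qed
qed

lemma del_range: "0 \<le> D \<Longrightarrow> 0 \<le> del c b D \<and> del c b D \<le> D"
proof -
  assume D0: "0 \<le> D"
  show ?thesis
  proof (cases "D \<le> dstar c b")
    case True thus ?thesis using del_lo[OF D0] D0 by simp
  next
    case False
    show ?thesis
    proof (cases "D \<le> 2*b")
      case True
      thus ?thesis using del_mid[of D] del_le_dstar[of D] False by simp
    next
      case False2: False
      thus ?thesis using del_hi D0 by simp
    qed
  qed
qed

lemma del_dec: "dstar c b \<le> D1 \<Longrightarrow> D1 \<le> D2 \<Longrightarrow> del c b D2 \<le> del c b D1 \<and> del c b D1 - del c b D2 \<le> (D2 - D1)/3"
proof -
  assume a1: "dstar c b \<le> D1" and a2: "D1 \<le> D2"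
  show ?thesis
  proof (cases "D2 \<le> 2*b")
    case True
    have m1: "0 \<le> del c b D1 \<and> 3 * del c b D1 + 2 * c (del c b D1) = 2*b - D1" using del_mid a1 a2 True by simp
    have m2: "0 \<le> del c b D2 \<and> 3 * del c b D2 + 2 * c (del c b D2) = 2*b - D2" using del_mid a1 a2 True by simp
    have le: "del c b D2 \<le> del c b D1"
    proof (rule ccontr)
      assume "\<not> del c b D2 \<le> del c b D1"
      hence "3 * del c b D1 + 2 * c (del c b D1) < 3 * del c b D2 + 2 * c (del c b D2)"
        using sm3 m1 by auto
      thus False using m1 m2 a2 by linarith
    qed
    have "c (del c b D2) \<le> c (del c b D1)" using mono le m2 by auto
    hence "3 * (del c b D1 - del c b D2) \<le> D2 - D1" using conjunct2[OF m1] conjunct2[OF m2] by (smt (verit))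
    thus ?thesis using le by simp
  next
    case False
    hence h2: "del c b D2 = 0" using del_hi by simp
    show ?thesis
    proof (cases "D1 \<le> 2*b")
      case True
      have m1: "0 \<le> del c b D1 \<and> 3 * del c b D1 + 2 * c (del c b D1) = 2*b - D1" using del_mid a1 True by simp
      have cc: "c (del c b D1) \<ge> 0" using cnn m1 by simp
      have "3 * del c b D1 \<le> D2 - D1" using conjunct2[OF m1] cc False by linarith
      thus ?thesis using h2 m1 by simp
    next
      case False
      thus ?thesis using h2 del_hi a2 by simp
    qed
  qed
qed

lemma del_strict: "dstar c b \<le> D1 \<Longrightarrow> D1 < D2 \<Longrightarrow> D2 \<le> 2*b \<Longrightarrow> del c b D2 < del c b D1"
proof -
  assume a1: "dstar c b \<le> D1" and a2: "D1 < D2" and a3: "D2 \<le> 2*b"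
  have m1: "0 \<le> del c b D1 \<and> 3 * del c b D1 + 2 * c (del c b D1) = 2*b - D1" using del_mid a1 a2 a3 by simp
  have m2: "0 \<le> del c b D2 \<and> 3 * del c b D2 + 2 * c (del c b D2) = 2*b - D2" using del_mid a1 a2 a3 by simp
  show ?thesis
  proof (rule ccontr)
    assume "\<not> del c b D2 < del c b D1"
    hence "del c b D1 \<le> del c b D2" by simp
    hence "c (del c b D1) \<le> c (del c b D2)" using mono m1 by auto
    moreover have "del c b D1 \<le> del c b D2" by fact
    ultimately show False using m1 m2 a2 by linarith
  qed
qed

definition gmap :: "real \<Rightarrow> real" where "gmap d = 2*b - 3*d - 2*c d"

lemma gmap_prop: "0 < d0 \<Longrightarrow> d0 < dstar c b \<Longrightarrow>
   dstar c b < gmap d0 \<and> gmap d0 < 2*b \<and> del c b (gmap d0) = d0"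
proof -
  assume d1: "0 < d0" and d2: "d0 < dstar c b"
  have "3*d0 + 2*c d0 < 3 * dstar c b + 2 * c (dstar c b)" using sm3 d1 d2 by auto
  hence g1: "dstar c b < gmap d0" using dstar_eq by (simp add: gmap_def)
  have "c d0 \<ge> 0" using cnn d1 by simp
  hence g2: "gmap d0 < 2*b" using d1 by (simp add: gmap_def)
  have m: "0 \<le> del c b (gmap d0) \<and> 3 * del c b (gmap d0) + 2 * c (del c b (gmap d0)) = 2*b - gmap d0"
    using del_mid g1 g2 by simp
  have "del c b (gmap d0) = d0"
    apply (rule solve_unique[OF sm3])
    using m d1 by (auto simp: gmap_def)
  thus ?thesis using g1 g2 by simp
qed

lemma gmap_inj: "inj_on gmap {0..}"
proof (rule inj_onI)
  fix x y assume "x \<in> {0..}" "y \<in> {0..}" "gmap x = gmap y"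
  thus "x = y" using solve_unique[OF sm3, of x y] by (simp add: gmap_def)
qed

lemma Cn_lo: "0 \<le> D \<Longrightarrow> D \<le> dstar c b \<Longrightarrow> Cn c b D = 4*D + c D"
  using phase1_iff by (simp add: Cn_def)

lemma Cn_hi: "dstar c b \<le> D \<Longrightarrow> Cn c b D = 3*D/2 + del c b D / 2 + b"
proof -
  assume D: "dstar c b \<le> D"
  have D0: "0 \<le> D" using D dstar_pos by simp
  show ?thesis
  proof (cases "D = dstar c b")
    case True
    have "Cn c b D = 4*D + c D" using Cn_lo D0 True by simp
    also have "\<dots> = 3*D/2 + D/2 + b" using dstar_eq True by simp
    finally show ?thesis using del_lo D0 True by simp
  next
    case False
    hence "\<not> (2*D + c D \<le> b)" using phase1_iff[OF D0] D by simp
    thus ?thesis by (simp add: Cn_def)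
  qed
qed

lemma Cn0: "Cn c b 0 = 0"
  using Cn_lo[of 0] dstar_pos c0 by simp

lemma Cn_mono: "\<forall>x y. 0 \<le> x \<longrightarrow> x \<le> y \<longrightarrow> Cn c b x \<le> Cn c b y"
proof (intro allI impI)
  fix x y :: real assume x: "0 \<le> x" and xy: "x \<le> y"
  let ?s = "dstar c b"
  have lo: "\<And>u v. 0 \<le> u \<Longrightarrow> u \<le> v \<Longrightarrow> v \<le> ?s \<Longrightarrow> Cn c b u \<le> Cn c b v"
    using Cn_lo mono by (smt (verit))
  have hi: "\<And>u v. ?s \<le> u \<Longrightarrow> u \<le> v \<Longrightarrow> Cn c b u \<le> Cn c b v"
  proof -
    fix u v assume "?s \<le> u" "u \<le> v"
    thus "Cn c b u \<le> Cn c b v" using Cn_hi[of u] Cn_hi[of v] del_dec[of u v] by simp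
  qed
  show "Cn c b x \<le> Cn c b y"
  proof (cases "y \<le> ?s")
    case True thus ?thesis using lo x xy by simp
  next
    case False
    show ?thesis
    proof (cases "?s \<le> x")
      case True thus ?thesis using hi xy by simp
    next
      case False2: False
      have "Cn c b x \<le> Cn c b ?s" using lo x False2 by simp
      also have "\<dots> \<le> Cn c b y" using hi False by simp
      finally show ?thesis .
    qed
  qed
qed

lemma Cn_lip:
  assumes L: "\<forall>x y. 0 \<le> x \<longrightarrow> 0 \<le> y \<longrightarrow> \<bar>c x - c y\<bar> \<le> L * \<bar>x - y\<bar>" and L0: "0 \<le> L"
  shows "\<forall>x y. 0 \<le> x \<longrightarrow> 0 \<le> y \<longrightarrow> \<bar>Cn c b x - Cn c b y\<bar> \<le> (4 + L) * \<bar>x - y\<bar>"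
proof -
  let ?s = "dstar c b"
  have lo: "\<And>u v. 0 \<le> u \<Longrightarrow> u \<le> v \<Longrightarrow> v \<le> ?s \<Longrightarrow> \<bar>Cn c b u - Cn c b v\<bar> \<le> (4 + L) * (v - u)"
  proof -
    fix u v assume a: "0 \<le> u" "u \<le> v" "v \<le> ?s"
    have "\<bar>c u - c v\<bar> \<le> L * \<bar>u - v\<bar>" using L a(1) order_trans[OF a(1) a(2)] by blast
    moreover have "\<bar>u - v\<bar> = v - u" using a by simp
    ultimately have "\<bar>c u - c v\<bar> \<le> L * (v - u)" by simp
    thus "\<bar>Cn c b u - Cn c b v\<bar> \<le> (4 + L) * (v - u)" using Cn_lo[of u] Cn_lo[of v] a
      by (simp add: abs_if algebra_simps split: if_splits)
  qed
  have hi: "\<And>u v. ?s \<le> u \<Longrightarrow> u \<le> v \<Longrightarrow> \<bar>Cn c b u - Cn c b v\<bar> \<le> (4 + L) * (v - u)"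
  proof -
    fix u v assume a: "?s \<le> u" "u \<le> v"
    have "\<bar>Cn c b u - Cn c b v\<bar> \<le> 2 * (v - u)"
      using Cn_hi[of u] Cn_hi[of v] del_dec[of u v] a by (simp add: abs_if)
    also have "\<dots> \<le> (4 + L) * (v - u)" using a L0 by (intro mult_right_mono) auto
    finally show "\<bar>Cn c b u - Cn c b v\<bar> \<le> (4 + L) * (v - u)" .
  qed
  have main: "\<And>u v. 0 \<le> u \<Longrightarrow> u \<le> v \<Longrightarrow> \<bar>Cn c b u - Cn c b v\<bar> \<le> (4 + L) * (v - u)"
  proof -
    fix u v :: real assume u: "0 \<le> u" and uv: "u \<le> v"
    show "\<bar>Cn c b u - Cn c b v\<bar> \<le> (4 + L) * (v - u)"
    proof (cases "v \<le> ?s")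
      case True thus ?thesis using lo u uv by simp
    next
      case False
      show ?thesis
      proof (cases "?s \<le> u")
        case True thus ?thesis using hi uv by simp
      next
        case False2: False
        have "\<bar>Cn c b u - Cn c b ?s\<bar> \<le> (4 + L) * (?s - u)" using lo u False2 by simp
        moreover have "\<bar>Cn c b ?s - Cn c b v\<bar> \<le> (4 + L) * (v - ?s)" using hi False by simp
        ultimately show ?thesis by (smt (verit, best) distrib_left)
      qed
    qed
  qed
  show ?thesis
  proof (intro allI impI)
    fix x y :: real assume "0 \<le> x" "0 \<le> y"
    thus "\<bar>Cn c b x - Cn c b y\<bar> \<le> (4 + L) * \<bar>x - y\<bar>"
      using main[of x y] main[of y x] by (cases "x \<le> y") (auto simp: abs_minus_commute)
  qed
qed

lemma Cn_bound: "0 \<le> D \<Longrightarrow> Cn c b D \<le> 2*D + b"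
proof -
  assume D0: "0 \<le> D"
  show ?thesis
  proof (cases "D \<le> dstar c b")
    case True thus ?thesis using Cn_lo[OF D0] phase1_iff[OF D0] by simp
  next
    case False thus ?thesis using Cn_hi[of D] del_range[OF D0] by simp
  qed
qed

end



definition gtl' :: "nat \<Rightarrow> nat \<Rightarrow> nat" where
  "gtl' j r = (if r = 1 then 2*j else if r = 3 then 2*j+1 else 2*j+2)"
definition ghd' :: "nat \<Rightarrow> nat \<Rightarrow> nat" where
  "ghd' j r = (if r = 0 then 2*j else if r = 2 then 2*j+1 else 2*j+3)"
definition gta' :: "nat \<Rightarrow> nat \<Rightarrow> real" where
  "gta' j r = (if r = 0 \<or> r = 3 then 2 else 1)"
definition gtb' :: "nat \<Rightarrow> nat \<Rightarrow> real" where
  "gtb' j r = (if r = 1 \<or> r = 2 then 16^(Suc j) else 0)"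

definition gtl :: "nat \<Rightarrow> nat" where
  "gtl e = (if e = 0 then 0 else gtl' ((e-1) div 4) ((e-1) mod 4))"
definition ghd :: "nat \<Rightarrow> nat" where
  "ghd e = (if e = 0 then 1 else ghd' ((e-1) div 4) ((e-1) mod 4))"
definition gta :: "nat \<Rightarrow> real" where
  "gta e = (if e = 0 then 1 else gta' ((e-1) div 4) ((e-1) mod 4))"
definition gtb :: "nat \<Rightarrow> real" where
  "gtb e = (if e = 0 then 0 else gtb' ((e-1) div 4) ((e-1) mod 4))"

lemma dm: "r < 4 \<Longrightarrow> (4*j + Suc r - 1) div 4 = j \<and> (4*j + Suc r - 1) mod 4 = (r::nat)"
  by simp

lemma ggen: "r < 4 \<Longrightarrow> gtl (4*j + Suc r) = gtl' j r \<and> ghd (4*j + Suc r) = ghd' j r \<and>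
   gta (4*j + Suc r) = gta' j r \<and> gtb (4*j + Suc r) = gtb' j r"
  unfolding gtl_def ghd_def gta_def gtb_def using dm[of r j] by simp

lemma g0: "gtl 0 = 0" "ghd 0 = 1" "gta 0 = 1" "gtb 0 = 0"
  by (simp_all add: gtl_def ghd_def gta_def gtb_def)

definition esv :: "nat \<Rightarrow> nat" where "esv j = 4*j+1"
definition evt :: "nat \<Rightarrow> nat" where "evt j = 4*j+2"
definition esw :: "nat \<Rightarrow> nat" where "esw j = 4*j+3"
definition ewt :: "nat \<Rightarrow> nat" where "ewt j = 4*j+4"
definition srcv :: "nat \<Rightarrow> nat" where "srcv k = 2*k"
definition snkv :: "nat \<Rightarrow> nat" where "snkv k = 2*k+1"
definition Ek :: "nat \<Rightarrow> nat set" where "Ek k = {..4*k}"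

lemma g1: "gtl (esv j) = srcv (Suc j)" "ghd (esv j) = srcv j" "gta (esv j) = 2" "gtb (esv j) = 0"
  using ggen[of 0 j] by (simp_all add: gtl'_def ghd'_def gta'_def gtb'_def esv_def srcv_def)
lemma g2: "gtl (evt j) = srcv j" "ghd (evt j) = snkv (Suc j)" "gta (evt j) = 1" "gtb (evt j) = 16^(Suc j)"
  using ggen[of 1 j] by (simp_all add: gtl'_def ghd'_def gta'_def gtb'_def evt_def srcv_def snkv_def)
lemma g3: "gtl (esw j) = srcv (Suc j)" "ghd (esw j) = snkv j" "gta (esw j) = 1" "gtb (esw j) = 16^(Suc j)"
  using ggen[of 2 j] by (simp_all add: gtl'_def ghd'_def gta'_def gtb'_def esw_def srcv_def snkv_def)
lemma g4: "gtl (ewt j) = snkv j" "ghd (ewt j) = snkv (Suc j)" "gta (ewt j) = 2" "gtb (ewt j) = 0"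
  using ggen[of 3 j] by (simp_all add: gtl'_def ghd'_def gta'_def gtb'_def ewt_def srcv_def snkv_def)
lemmas gS = g1 g2 g3 g4

lemma edistinct: "esv j \<noteq> evt j" "esv j \<noteq> esw j" "esv j \<noteq> ewt j" "evt j \<noteq> esw j"
  "evt j \<noteq> ewt j" "esw j \<noteq> ewt j"
  "evt j \<noteq> esv j" "esw j \<noteq> esv j" "ewt j \<noteq> esv j" "esw j \<noteq> evt j"
  "ewt j \<noteq> evt j" "ewt j \<noteq> esw j"
  by (simp_all add: esv_def evt_def esw_def ewt_def)

lemma eout: "esv j \<notin> Ek j" "evt j \<notin> Ek j" "esw j \<notin> Ek j" "ewt j \<notin> Ek j"
  "esv j \<in> Ek (Suc j)" "evt j \<in> Ek (Suc j)" "esw j \<in> Ek (Suc j)" "ewt j \<in> Ek (Suc j)"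
  "Ek j \<subseteq> Ek (Suc j)"
  by (auto simp: esv_def evt_def esw_def ewt_def Ek_def)

lemma vdistinct: "srcv j \<noteq> snkv j" "srcv (Suc j) \<noteq> snkv (Suc j)" "srcv (Suc j) \<noteq> srcv j"
  "srcv (Suc j) \<noteq> snkv j" "snkv (Suc j) \<noteq> srcv j" "snkv (Suc j) \<noteq> snkv j"
  "snkv j \<noteq> srcv j" "snkv (Suc j) \<noteq> srcv (Suc j)" "srcv j \<noteq> srcv (Suc j)"
  "snkv j \<noteq> srcv (Suc j)" "srcv j \<noteq> snkv (Suc j)" "snkv j \<noteq> snkv (Suc j)"
  by (simp_all add: srcv_def snkv_def)

lemma g_pos: "gta e > 0" "gtb e \<ge> 0"
  by (auto simp: gta_def gtb_def gta'_def gtb'_def)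

lemma g_range0: "e \<le> 4*k \<Longrightarrow> gtl e \<le> 2*k+1 \<and> ghd e \<le> 2*k+1 \<and> ghd e \<noteq> 2*k"
proof (cases "e = 0")
  case True thus ?thesis by (simp add: g0)
next
  case False
  assume e: "e \<le> 4*k"
  define i where "i = (e-1) div 4"
  have j: "i < k" using e False i_def by linarith
  hence ij: "2*i+3 \<le> 2*k+1" by linarith
  have o: "2*i+3 \<noteq> 2*k" "2*i+1 \<noteq> 2*k" "2*i \<noteq> 2*k" using j by presburger+
  have "gtl' i r \<le> 2*k+1 \<and> ghd' i r \<le> 2*k+1 \<and> ghd' i r \<noteq> 2*k" for r
    using ij j o unfolding gtl'_def ghd'_def by auto
  thus ?thesis using False unfolding gtl_def ghd_def i_def[symmetric] by simp
qed


definition Vk :: "nat \<Rightarrow> nat set" where "Vk k = {..2*k+1}"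

lemma g_range: "e \<in> Ek k \<Longrightarrow> gtl e \<in> Vk k \<and> ghd e \<in> Vk k \<and> ghd e \<noteq> srcv k"
  using g_range0 by (simp add: Ek_def Vk_def srcv_def)

lemma vin: "srcv k \<in> Vk k" "snkv k \<in> Vk k" "srcv (Suc k) \<notin> Vk k" "snkv (Suc k) \<notin> Vk k"
  "Vk k \<subseteq> Vk (Suc k)" "srcv (Suc k) \<in> Vk (Suc k)" "snkv (Suc k) \<in> Vk (Suc k)"
  by (auto simp: Vk_def srcv_def snkv_def)

lemma edge_cases: "e \<in> Ek (Suc j) \<Longrightarrow> e \<in> Ek j \<or> e = esv j \<or> e = evt j \<or> e = esw j \<or> e = ewt j"
  unfolding Ek_def esv_def evt_def esw_def ewt_def by auto

fun Cst :: "nat \<Rightarrow> real \<Rightarrow> real" where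
  "Cst 0 = (\<lambda>d. d)"
| "Cst (Suc j) = Cn (Cst j) (16^(Suc j))"

lemma Cst_props: "Cst j 0 = 0 \<and> (\<forall>x y. 0 \<le> x \<longrightarrow> x \<le> y \<longrightarrow> Cst j x \<le> Cst j y) \<and>
   (\<exists>L\<ge>0. \<forall>x y. 0 \<le> x \<longrightarrow> 0 \<le> y \<longrightarrow> \<bar>Cst j x - Cst j y\<bar> \<le> L * \<bar>x - y\<bar>)"
proof (induction j)
  case 0
  show ?case by (auto intro!: exI[of _ 1])
next
  case (Suc j)
  have c0: "Cst j 0 = 0" and mo: "\<forall>x y. 0 \<le> x \<longrightarrow> x \<le> y \<longrightarrow> Cst j x \<le> Cst j y" using Suc by auto
  obtain L where L0: "L \<ge> 0" and L: "\<forall>x y. 0 \<le> x \<longrightarrow> 0 \<le> y \<longrightarrow> \<bar>Cst j x - Cst j y\<bar> \<le> L * \<bar>x - y\<bar>"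
    using Suc by auto
  have co: "continuous_on {0..} (Cst j)" using lip_cont[OF L] .
  have bp: "(0::real) < 16^(Suc j)" by simp
  show ?case
    using Cn0[OF c0 mo co bp] Cn_mono[OF c0 mo co bp] Cn_lip[OF c0 mo co bp L L0] L0
    by (auto intro!: exI[of _ "4 + L"])
qed

lemma H: "Cst j 0 = 0" "\<forall>x y. 0 \<le> x \<longrightarrow> x \<le> y \<longrightarrow> Cst j x \<le> Cst j y"
  "continuous_on {0..} (Cst j)" "(0::real) < 16^(Suc j)"
proof -
  show "Cst j 0 = 0" "\<forall>x y. 0 \<le> x \<longrightarrow> x \<le> y \<longrightarrow> Cst j x \<le> Cst j y" using Cst_props by auto
  obtain L where "\<forall>x y. 0 \<le> x \<longrightarrow> 0 \<le> y \<longrightarrow> \<bar>Cst j x - Cst j y\<bar> \<le> L * \<bar>x - y\<bar>"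
    using Cst_props by blast
  thus "continuous_on {0..} (Cst j)" by (rule lip_cont)
  show "(0::real) < 16^(Suc j)" by simp
qed

definition Dl :: "nat \<Rightarrow> real \<Rightarrow> real" where
  "Dl j D = del (Cst j) (16^(Suc j)) D"

fun X :: "nat \<Rightarrow> real \<Rightarrow> nat \<Rightarrow> real" where
  "X 0 d e = (if e = 0 then d else 0)"
| "X (Suc j) D e = (if e = esv j \<or> e = ewt j then (D + Dl j D)/2
      else if e = evt j \<or> e = esw j then (D - Dl j D)/2 else X j (Dl j D) e)"

definition P1 :: "nat \<Rightarrow> nat list" where "P1 j = [esv j, evt j]"
definition P2 :: "nat \<Rightarrow> nat list" where "P2 j = [esw j, ewt j]"

fun F :: "nat \<Rightarrow> real \<Rightarrow> nat list \<Rightarrow> real" where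
  "F 0 d p = (if p = [0] then d else 0)"
| "F (Suc j) D p = (if p = P1 j \<or> p = P2 j then (D - Dl j D)/2
      else if p \<noteq> [] \<and> hd p = esv j \<and> last p = ewt j then F j (Dl j D) (butlast (tl p)) else 0)"

definition W :: "nat \<Rightarrow> nat list \<Rightarrow> nat list" where
  "W j q = esv j # q @ [ewt j]"

fun Pth :: "nat \<Rightarrow> nat list set" where
  "Pth 0 = {[0]}"
| "Pth (Suc j) = insert (P1 j) (insert (P2 j) (W j ` Pth j))"

fun Pi :: "nat \<Rightarrow> real \<Rightarrow> nat \<Rightarrow> real" where
  "Pi 0 d y = (if y = 1 then d else 0)"
| "Pi (Suc j) D y = (let t = Dl j D; b = (16::real)^(Suc j); pv = D + t;
       pw = (if D < 2*b then D + t + Cst j t else D/2 + b) in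
     if y = srcv (Suc j) then 0 else if y = snkv (Suc j) then Cst (Suc j) D else if y = srcv j then pv
     else if y = snkv j then pw else if D < 2*b then pv + Pi j t y else pw)"

declare Pi.simps(2)[simp del] X.simps(2)[simp del] F.simps(2)[simp del]

lemma Dl_range: "0 \<le> D \<Longrightarrow> 0 \<le> Dl j D \<and> Dl j D \<le> D"
  unfolding Dl_def using del_range[OF H] by blast

definition pathok :: "nat \<Rightarrow> nat list \<Rightarrow> bool" where
  "pathok k p \<longleftrightarrow> p \<noteq> [] \<and> set p \<subseteq> Ek k \<and> gtl (hd p) = srcv k \<and> ghd (last p) = snkv k \<and>
     successively (\<lambda>a b. ghd a = gtl b) p \<and> distinct (gtl (hd p) # map ghd p) \<and>
     set (map ghd p) \<subseteq> Vk k"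

lemma W_props: "W j q \<noteq> P1 j" "W j q \<noteq> P2 j" "hd (W j q) = esv j"
  "last (W j q) = ewt j" "butlast (tl (W j q)) = q" "W j q \<noteq> []" "P1 j \<noteq> P2 j"
  "P1 j \<noteq> W j q" "P2 j \<noteq> W j q"
  by (auto simp: W_def P1_def P2_def edistinct)

lemma W_inj: "inj (W j)"
  by (rule injI) (simp add: W_def)

lemma Pth_props: "finite (Pth k) \<and> (\<forall>p\<in>Pth k. pathok k p)"
proof (induction k)
  case 0
  show ?case by (simp add: pathok_def g0 Ek_def Vk_def srcv_def snkv_def)
next
  case (Suc j)
  have fin: "finite (Pth (Suc j))" using Suc by simp
  have P1: "pathok (Suc j) (P1 j)"
  proof -
    have a: "set (P1 j) \<subseteq> Ek (Suc j)" using eout(5,6) by (simp add: P1_def)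
    have b: "gtl (hd (P1 j)) = srcv (Suc j)" "ghd (last (P1 j)) = snkv (Suc j)"
      by (simp_all add: P1_def g1 g2)
    have c: "successively (\<lambda>a b. ghd a = gtl b) (P1 j)" by (simp add: P1_def g1 g2)
    have d: "distinct (gtl (hd (P1 j)) # map ghd (P1 j))"
      by (simp add: P1_def g1 g2 vdistinct)
    have e: "set (map ghd (P1 j)) \<subseteq> Vk (Suc j)"
      using vin(1,5,7) by (auto simp add: P1_def g1 g2)
    show ?thesis unfolding pathok_def using a b c d e by (simp add: P1_def)
  qed
  have P2: "pathok (Suc j) (P2 j)"
  proof -
    have a: "set (P2 j) \<subseteq> Ek (Suc j)" using eout(7,8) by (simp add: P2_def)
    have b: "gtl (hd (P2 j)) = srcv (Suc j)" "ghd (last (P2 j)) = snkv (Suc j)"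
      by (simp_all add: P2_def g3 g4)
    have c: "successively (\<lambda>a b. ghd a = gtl b) (P2 j)" by (simp add: P2_def g3 g4)
    have d: "distinct (gtl (hd (P2 j)) # map ghd (P2 j))"
      by (simp add: P2_def g3 g4 vdistinct)
    have e: "set (map ghd (P2 j)) \<subseteq> Vk (Suc j)"
      using vin(2,5,7) by (auto simp add: P2_def g3 g4)
    show ?thesis unfolding pathok_def using a b c d e by (simp add: P2_def)
  qed
  have PW: "pathok (Suc j) (W j q)" if q: "q \<in> Pth j" for q
  proof -
    have ok: "pathok j q" using Suc q by blast
    hence qne: "q \<noteq> []" and qs: "set q \<subseteq> Ek j" and qh: "gtl (hd q) = srcv j"
      and ql: "ghd (last q) = snkv j" and qsu: "successively (\<lambda>a b. ghd a = gtl b) q"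
      and qd: "distinct (gtl (hd q) # map ghd q)" and qv: "set (map ghd q) \<subseteq> Vk j"
      unfolding pathok_def by auto
    have "successively (\<lambda>a b. ghd a = gtl b) (W j q)"
      unfolding W_def using qne qsu qh ql
      by (simp add: successively_append_iff successively_Cons gS hd_append)
    moreover have "distinct (gtl (hd (W j q)) # map ghd (W j q))"
    proof -
      have n1: "srcv (Suc j) \<notin> ghd ` set q" "snkv (Suc j) \<notin> ghd ` set q"
        using qv vin(3,4) by auto
      show ?thesis using qd qh n1 by (simp add: W_def gS vdistinct)
    qed
    moreover have "set (W j q) \<subseteq> Ek (Suc j)"
    proof -
      have "set q \<subseteq> Ek (Suc j)" using qs eout(9) by blast
      thus ?thesis using eout(5,8) by (simp add: W_def)
    qed
    moreover have "set (map ghd (W j q)) \<subseteq> Vk (Suc j)"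
    proof -
      have "ghd ` set q \<subseteq> Vk (Suc j)" using qv vin(5) by auto
      moreover have "srcv j \<in> Vk (Suc j)" using vin(1,5) by blast
      ultimately show ?thesis using vin(7) by (simp add: W_def gS)
    qed
    ultimately show ?thesis by (simp add: pathok_def W_props gS)
  qed
  show ?case using fin P1 P2 PW by auto
qed

lemma Pth_ok: "p \<in> Pth k \<Longrightarrow> pathok k p" using Pth_props by blast
lemma Pth_fin: "finite (Pth k)" using Pth_props by blast

lemma sum_Pth_Suc: "(\<Sum>p\<in>Pth (Suc j). g p) = g (P1 j) + g (P2 j) + (\<Sum>q\<in>Pth j. g (W j q))"
proof -
  have n1: "P1 j \<notin> insert (P2 j) (W j ` Pth j)" using W_props by auto
  have n2: "P2 j \<notin> W j ` Pth j" using W_props by auto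
  have f: "finite (W j ` Pth j)" using Pth_fin by simp
  show ?thesis
    using n1 n2 f by (simp add: sum.reindex[OF inj_on_subset[OF W_inj subset_UNIV]] add.assoc)
qed

lemma split_path: "p \<noteq> [] \<Longrightarrow> hd p = x \<Longrightarrow> last p = y \<Longrightarrow> x \<noteq> y \<Longrightarrow> p = x # butlast (tl p) @ [y]"
proof (cases p)
  case (Cons a r)
  assume "hd p = x" "last p = y" "x \<noteq> y"
  hence "r \<noteq> []" using Cons by auto
  thus ?thesis using Cons \<open>hd p = x\<close> \<open>last p = y\<close> by (metis append_butlast_last_id last_ConsR list.sel(1,3))
qed simp

lemma F_W: "F (Suc j) D (W j q) = F j (Dl j D) q"
  unfolding F.simps(2) using W_props by simp

lemma flow_inv: "0 \<le> d \<Longrightarrow> (\<forall>p. 0 \<le> F k d p) \<and> (\<forall>p. F k d p \<noteq> 0 \<longrightarrow> p \<in> Pth k) \<and>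
   sum (F k d) (Pth k) = d \<and> (\<forall>e. X k d e = (\<Sum>p\<in>Pth k. if e \<in> set p then F k d p else 0))"
proof (induction k arbitrary: d)
  case 0
  thus ?case by auto
next
  case (Suc j D)
  define t where "t = Dl j D"
  have t: "0 \<le> t" "t \<le> D" using Dl_range[OF Suc.prems] t_def by auto
  have IH: "(\<forall>p. 0 \<le> F j t p) \<and> (\<forall>p. F j t p \<noteq> 0 \<longrightarrow> p \<in> Pth j) \<and>
   sum (F j t) (Pth j) = t \<and> (\<forall>e. X j t e = (\<Sum>p\<in>Pth j. if e \<in> set p then F j t p else 0))"
    using Suc.IH t by blast
  have I1: "\<forall>p. 0 \<le> F j t p" and I2: "\<forall>p. F j t p \<noteq> 0 \<longrightarrow> p \<in> Pth j"
    and I3: "sum (F j t) (Pth j) = t" and I4: "\<forall>e. X j t e = (\<Sum>p\<in>Pth j. if e \<in> set p then F j t p else 0)"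
    using IH by blast+
  have Fdef: "F (Suc j) D p = (if p = P1 j \<or> p = P2 j then (D - t)/2
      else if p \<noteq> [] \<and> hd p = esv j \<and> last p = ewt j then F j t (butlast (tl p)) else 0)" for p
    unfolding t_def by (rule F.simps(2))
  have FW: "\<And>q. F (Suc j) D (W j q) = F j t q" using F_W t_def by simp
  have FP: "F (Suc j) D (P1 j) = (D - t)/2" "F (Suc j) D (P2 j) = (D - t)/2" unfolding Fdef by simp_all
  have nn: "\<forall>p. 0 \<le> F (Suc j) D p"
  proof
    fix p show "0 \<le> F (Suc j) D p" unfolding Fdef using I1 t by simp
  qed
  have supp: "\<forall>p. F (Suc j) D p \<noteq> 0 \<longrightarrow> p \<in> Pth (Suc j)"
  proof (intro allI impI)
    fix p assume nz: "F (Suc j) D p \<noteq> 0"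
    show "p \<in> Pth (Suc j)"
    proof (cases "p = P1 j \<or> p = P2 j")
      case True thus ?thesis by (elim disjE) simp_all
    next
      case False
      have Fp: "F (Suc j) D p = (if p \<noteq> [] \<and> hd p = esv j \<and> last p = ewt j then F j t (butlast (tl p)) else 0)"
        using Fdef[of p] False by presburger
      have c: "p \<noteq> [] \<and> hd p = esv j \<and> last p = ewt j" using nz Fp by metis
      have fz: "F j t (butlast (tl p)) \<noteq> 0" using nz Fp c by metis
      have "butlast (tl p) \<in> Pth j" using I2 fz by blast
      moreover have "p = esv j # butlast (tl p) @ [ewt j]"
        using split_path[of p "esv j" "ewt j"] c edistinct(3) by blast
      hence "p = W j (butlast (tl p))" unfolding W_def .
      ultimately show ?thesis by (metis Pth.simps(2) image_eqI insertI2)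
    qed
  qed
  have sm: "sum (F (Suc j) D) (Pth (Suc j)) = D"
    unfolding sum_Pth_Suc FW FP I3 by simp
  have xs: "X (Suc j) D e = (\<Sum>p\<in>Pth (Suc j). if e \<in> set p then F (Suc j) D p else 0)" for e
  proof -
    have inW: "e \<in> set (W j q) \<longleftrightarrow> e = esv j \<or> e = ewt j \<or> e \<in> set q" for q
      by (auto simp: W_def)
    have qs: "\<forall>q\<in>Pth j. set q \<subseteq> Ek j" using Pth_ok by (auto simp: pathok_def)
    have Xdef: "X (Suc j) D e = (if e = esv j \<or> e = ewt j then (D + t)/2
      else if e = evt j \<or> e = esw j then (D - t)/2 else X j t e)"
      unfolding t_def by (rule X.simps(2))
    have R: "(\<Sum>p\<in>Pth (Suc j). if e \<in> set p then F (Suc j) D p else 0) =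
       (if e \<in> set (P1 j) then (D - t)/2 else 0) + (if e \<in> set (P2 j) then (D - t)/2 else 0)
       + (\<Sum>q\<in>Pth j. if e \<in> set (W j q) then F j t q else 0)"
      unfolding sum_Pth_Suc FW FP by simp
    show ?thesis
    proof (cases "e = esv j \<or> e = ewt j")
      case True
      hence "\<And>q. e \<in> set (W j q)" using inW by blast
      hence "(\<Sum>q\<in>Pth j. if e \<in> set (W j q) then F j t q else 0) = (\<Sum>q\<in>Pth j. F j t q)"
        by simp
      hence "(\<Sum>q\<in>Pth j. if e \<in> set (W j q) then F j t q else 0) = t" using I3 by simp
      moreover have "(if e \<in> set (P1 j) then (D - t)/2 else 0) + (if e \<in> set (P2 j) then (D - t)/2 else 0) = (D - t)/2"
        using True edistinct by (auto simp: P1_def P2_def)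
      ultimately show ?thesis using R True Xdef by simp
    next
      case False
      hence A: "(\<Sum>q\<in>Pth j. if e \<in> set (W j q) then F j t q else 0) = (\<Sum>q\<in>Pth j. if e \<in> set q then F j t q else 0)"
        using inW by simp
      show ?thesis
      proof (cases "e = evt j \<or> e = esw j")
        case True
        have "(\<Sum>q\<in>Pth j. if e \<in> set q then F j t q else 0) = 0"
          using qs eout(2,3) True by (intro sum.neutral) auto
        moreover have "(if e \<in> set (P1 j) then (D - t)/2 else 0) + (if e \<in> set (P2 j) then (D - t)/2 else 0) = (D - t)/2"
          using True edistinct by (auto simp: P1_def P2_def)
        ultimately show ?thesis using R A False True Xdef by simp
      next
        case False2: False
        have "(if e \<in> set (P1 j) then (D - t)/2 else 0) + (if e \<in> set (P2 j) then (D - t)/2 else 0) = 0"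
          using False False2 by (auto simp: P1_def P2_def)
        thus ?thesis using R A False False2 Xdef I4 by simp
      qed
    qed
  qed
  show ?case using nn supp sm xs by blast
qed

lemma X_nonneg: "0 \<le> d \<Longrightarrow> 0 \<le> X k d e"
  using flow_inv[of d k] by (auto intro: sum_nonneg)

lemma X_out: "0 \<le> d \<Longrightarrow> e \<notin> Ek k \<Longrightarrow> X k d e = 0"
proof -
  assume d: "0 \<le> d" and e: "e \<notin> Ek k"
  have "\<forall>p\<in>Pth k. e \<notin> set p" using Pth_ok e by (fastforce simp: pathok_def)
  thus ?thesis using flow_inv[OF d, of k] by simp
qed

lemma X_zero: "X k 0 e = 0"
proof -
  have f: "(\<forall>p. 0 \<le> F k 0 p) \<and> sum (F k 0) (Pth k) = 0 \<and> (\<forall>e. X k 0 e = (\<Sum>p\<in>Pth k. if e \<in> set p then F k 0 p else 0))"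
    using flow_inv[of 0 k] by auto
  hence z: "\<forall>p\<in>Pth k. F k 0 p = 0" using sum_nonneg_eq_0_iff[OF Pth_fin] by blast
  have "(\<Sum>p\<in>Pth k. if e \<in> set p then F k 0 p else 0) = 0" using z by (intro sum.neutral) simp
  thus ?thesis using f by simp
qed


lemma Pi_Suc_eq: "Pi (Suc j) D y = (let t = Dl j D; b = (16::real)^(Suc j);
       pw = (if D < 2*b then D + t + Cst j t else D/2 + b) in
     if y = srcv (Suc j) then 0 else if y = snkv (Suc j) then Cn (Cst j) b D else if y = srcv j then D + t
     else if y = snkv j then pw else if D < 2*b then D + t + Pi j t y else pw)"
  by (simp only: Pi.simps Let_def Cst.simps)

lemma pot_inv: "0 \<le> d \<Longrightarrow> Pi k d (srcv k) = 0 \<and> Pi k d (snkv k) = Cst k d \<and>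
   (\<forall>e\<in>Ek k. Pi k d (ghd e) \<le> Pi k d (gtl e) + gta e * X k d e + gtb e) \<and>
   (\<forall>e\<in>Ek k. 0 < X k d e \<longrightarrow> Pi k d (ghd e) = Pi k d (gtl e) + gta e * X k d e + gtb e)"
proof (induction k arbitrary: d)
  case 0
  have "Ek 0 = {0}" by (auto simp: Ek_def)
  thus ?case by (simp add: srcv_def snkv_def g0)
next
  case (Suc j D)
  define c where "c = Cst j"
  define b where "b = (16::real)^(Suc j)"
  define t where "t = Dl j D"
  define pw where "pw = (if D < 2*b then D + t + c t else D/2 + b)"
  define s where "s = dstar c b"
  note HH = H[of j, folded c_def b_def]
  have D0: "0 \<le> D" using Suc.prems .
  have tr: "0 \<le> t" "t \<le> D" using Dl_range[OF D0] t_def by auto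
  have tdel: "t = del c b D" by (simp add: t_def Dl_def c_def b_def)
  have bpos: "0 < b" by (simp add: b_def)
  have IH: "Pi j t (srcv j) = 0 \<and> Pi j t (snkv j) = c t \<and>
   (\<forall>e\<in>Ek j. Pi j t (ghd e) \<le> Pi j t (gtl e) + gta e * X j t e + gtb e) \<and>
   (\<forall>e\<in>Ek j. 0 < X j t e \<longrightarrow> Pi j t (ghd e) = Pi j t (gtl e) + gta e * X j t e + gtb e)"
    using Suc.IH[OF tr(1)] c_def by simp
  have Pid: "Pi (Suc j) D y = (if y = srcv (Suc j) then 0 else if y = snkv (Suc j) then Cn c b D else if y = srcv j then D + t
     else if y = snkv j then pw else if D < 2*b then D + t + Pi j t y else pw)" for y
    unfolding Pi_Suc_eq Let_def pw_def c_def b_def t_def by simp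
  have Xd: "X (Suc j) D e = (if e = esv j \<or> e = ewt j then (D + t)/2
      else if e = evt j \<or> e = esw j then (D - t)/2 else X j t e)" for e
    unfolding t_def by (rule X.simps(2))
  have sprop: "0 < s" "2*s + c s = b" using dstar_pos[OF HH] dstar_eq[OF HH] s_def by auto
  have cs: "0 \<le> c s" using cnn[OF HH] sprop by simp
  have s2b: "s < 2*b" using sprop cs bpos by linarith
  have E: "Cn c b D = pw + D + t \<and> pw \<le> (D - t)/2 + b \<and> (0 < (D - t)/2 \<longrightarrow> pw = (D - t)/2 + b)"
  proof (cases "D \<le> s")
    case True
    have tD: "t = D" using del_lo[OF HH D0] True tdel s_def by simp
    have C: "Cn c b D = 4*D + c D" using Cn_lo[OF HH D0] True s_def by simp
    have p1: "2*D + c D \<le> b" using phase1_iff[OF HH D0] True s_def by simp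
    have "D < 2*b" using True s2b by simp
    hence "pw = 2*D + c D" using tD by (simp add: pw_def)
    thus ?thesis using C tD p1 by simp
  next
    case False
    hence sD: "s \<le> D" by simp
    have C: "Cn c b D = 3*D/2 + t/2 + b" using Cn_hi[OF HH] sD s_def tdel by simp
    show ?thesis
    proof (cases "D < 2*b")
      case True
      have m: "3*t + 2*c t = 2*b - D" using del_mid[OF HH] sD True s_def tdel by simp
      have "pw = D + t + c t" using True by (simp add: pw_def)
      thus ?thesis using C m by (simp add: field_simps)
    next
      case False2: False
      have t0: "t = 0" using del_hi[OF HH] False2 tdel by simp
      have "pw = D/2 + b" using False2 by (simp add: pw_def)
      thus ?thesis using C t0 by simp
    qed
  qed
  have inner: "Pi (Suc j) D (ghd e) \<le> Pi (Suc j) D (gtl e) + gta e * X (Suc j) D e + gtb e \<and>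
     (0 < X (Suc j) D e \<longrightarrow> Pi (Suc j) D (ghd e) = Pi (Suc j) D (gtl e) + gta e * X (Suc j) D e + gtb e)"
    if e: "e \<in> Ek j" for e
  proof -
    have gr: "gtl e \<in> Vk j" "ghd e \<in> Vk j" "ghd e \<noteq> srcv j" using g_range[OF e] by auto
    have ne: "e \<noteq> esv j" "e \<noteq> ewt j" "e \<noteq> evt j" "e \<noteq> esw j" using e eout(1-4) by auto
    have Xe: "X (Suc j) D e = X j t e" unfolding Xd using ne by simp
    have nv: "\<And>y. y \<in> Vk j \<Longrightarrow> y \<noteq> srcv (Suc j) \<and> y \<noteq> snkv (Suc j)" using vin(3,4) by blast
    show ?thesis
    proof (cases "D < 2*b")
      case True
      have sh: "\<And>y. y \<in> Vk j \<Longrightarrow> Pi (Suc j) D y = D + t + Pi j t y"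
      proof -
        fix y assume y: "y \<in> Vk j"
        show "Pi (Suc j) D y = D + t + Pi j t y"
          using nv[OF y] IH True unfolding Pid by (auto simp: pw_def)
      qed
      show ?thesis using sh[OF gr(1)] sh[OF gr(2)] Xe IH e by auto
    next
      case False
      have t0: "t = 0" using del_hi[OF HH] False tdel by simp
      have X0: "X (Suc j) D e = 0" using Xe t0 X_zero by simp
      have ph: "Pi (Suc j) D (ghd e) = pw" using nv[OF gr(2)] gr(3) False unfolding Pid by auto
      have pwD: "pw \<le> D + t" using False t0 by (simp add: pw_def)
      have pt: "pw \<le> Pi (Suc j) D (gtl e)" using nv[OF gr(1)] False pwD unfolding Pid by auto
      show ?thesis using ph pt X0 g_pos(2)[of e] by simp
    qed
  qed
  have vv: "Pi (Suc j) D (srcv (Suc j)) = 0" "Pi (Suc j) D (snkv (Suc j)) = Cn c b D"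
    "Pi (Suc j) D (srcv j) = D + t" "Pi (Suc j) D (snkv j) = pw"
    unfolding Pid using vdistinct by auto
  have outer: "Pi (Suc j) D (ghd e) \<le> Pi (Suc j) D (gtl e) + gta e * X (Suc j) D e + gtb e \<and>
     (0 < X (Suc j) D e \<longrightarrow> Pi (Suc j) D (ghd e) = Pi (Suc j) D (gtl e) + gta e * X (Suc j) D e + gtb e)"
    if e: "e = esv j \<or> e = evt j \<or> e = esw j \<or> e = ewt j" for e
  proof -
    define xp where "xp = (D + t)/2"
    define xm where "xm = (D - t)/2"
    have X1: "X (Suc j) D (esv j) = xp" "X (Suc j) D (ewt j) = xp"
      "X (Suc j) D (evt j) = xm" "X (Suc j) D (esw j) = xm"
      unfolding Xd xp_def xm_def using edistinct by auto
    have xp2: "2 * xp = D + t" by (simp add: xp_def)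
    have E': "Cn c b D = pw + D + t" "pw \<le> xm + b" "0 < xm \<Longrightarrow> pw = xm + b"
      using E by (auto simp: xm_def)
    have bb: "(16::real) * 16^j = b" by (simp add: b_def)
    show ?thesis using e
    proof (elim disjE)
      assume "e = esv j" thus ?thesis using xp2 by (simp add: g1 X1 vv)
    next
      assume "e = evt j" thus ?thesis using E' by (simp add: g2 X1 vv bb)
    next
      assume "e = esw j" thus ?thesis using E' by (simp add: g3 X1 vv bb)
    next
      assume "e = ewt j" thus ?thesis using E' xp2 by (simp add: g4 X1 vv)
    qed
  qed
  have all: "\<forall>e\<in>Ek (Suc j). Pi (Suc j) D (ghd e) \<le> Pi (Suc j) D (gtl e) + gta e * X (Suc j) D e + gtb e \<and>
     (0 < X (Suc j) D e \<longrightarrow> Pi (Suc j) D (ghd e) = Pi (Suc j) D (gtl e) + gta e * X (Suc j) D e + gtb e)"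
    using inner outer edge_cases by blast
  show ?case using all vv c_def b_def by simp
qed


lemma Dl_X: "Dl j l = X (Suc j) l (esv j) - X (Suc j) l (evt j)"
  unfolding X.simps(2) using edistinct by (simp add: field_simps)

lemma X_inner: "e \<in> Ek j \<Longrightarrow> X (Suc j) l e = X j (Dl j l) e"
  unfolding X.simps(2) using eout(1-4) by auto

lemma phiaff_Dl:
  assumes "\<forall>l. \<bar>l - l0\<bar> < \<epsilon> \<longrightarrow> (\<forall>e\<in>Ek (Suc j). X (Suc j) l e = p e + q e * l)"
  shows "\<exists>\<alpha> \<beta>. \<forall>l. \<bar>l - l0\<bar> < \<epsilon> \<longrightarrow> Dl j l = \<alpha> + \<beta> * l"
proof (intro exI allI impI)
  fix l assume "\<bar>l - l0\<bar> < \<epsilon>"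
  hence "X (Suc j) l (esv j) = p (esv j) + q (esv j) * l" "X (Suc j) l (evt j) = p (evt j) + q (evt j) * l"
    using assms eout(5,6) by auto
  thus "Dl j l = (p (esv j) - p (evt j)) + (q (esv j) - q (evt j)) * l"
    unfolding Dl_X by (simp add: algebra_simps)
qed

lemma bp_inv: "\<exists>Bs. finite Bs \<and> 2^k - 1 \<le> card Bs \<and>
   (\<forall>d0\<in>Bs. 0 < d0 \<and> 2*d0 + Cst k d0 \<le> 9*16^k \<and> \<not> aff (Ek k) (X k) d0)"
proof (induction k)
  case 0
  show ?case by (rule exI[of _ "{}"]) simp
next
  case (Suc j)
  obtain Bs where fin: "finite Bs" and cardB: "2^j - 1 \<le> card Bs"
    and B: "\<forall>d0\<in>Bs. 0 < d0 \<and> 2*d0 + Cst j d0 \<le> 9*16^j \<and> \<not> aff (Ek j) (X j) d0"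
    using Suc.IH by blast
  define c where "c = Cst j"
  define b where "b = (16::real)^(Suc j)"
  define s where "s = dstar c b"
  note HH = H[of j, folded c_def b_def]
  have bpos: "0 < b" by (simp add: b_def)
  have sprop: "0 < s" "2*s + c s = b" using dstar_pos[OF HH] dstar_eq[OF HH] s_def by auto
  have cs: "0 \<le> c s" using cnn[OF HH] sprop by simp
  have s2b: "s < 2*b" using sprop cs bpos by linarith
  have Dld: "\<And>l. Dl j l = del c b l" by (simp add: Dl_def c_def b_def)
  have Bs_s: "\<forall>d0\<in>Bs. 0 < d0 \<and> d0 < s"
  proof
    fix d0 assume d0: "d0 \<in> Bs"
    have a: "0 < d0" "2*d0 + c d0 \<le> 9*16^j" using B d0 c_def by auto
    have "9*(16::real)^j < b" by (simp add: b_def)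
    hence lt: "2*d0 + c d0 < b" using a by linarith
    hence "d0 \<le> s" using phase1_iff[OF HH, of d0] a s_def by simp
    moreover have "d0 \<noteq> s" using lt sprop by auto
    ultimately show "0 < d0 \<and> d0 < s" using a by simp
  qed
  define G where "G = gmap c b"
  have Gp: "\<And>d0. d0 \<in> Bs \<Longrightarrow> s < G d0 \<and> G d0 < 2*b \<and> del c b (G d0) = d0"
    using gmap_prop[OF HH] Bs_s s_def G_def by blast
  have Ginj: "inj_on G Bs"
    using inj_on_subset[OF gmap_inj[OF HH]] Bs_s G_def by (metis atLeast_iff less_eq_real_def subsetI)
  define Bs' where "Bs' = Bs \<union> G ` Bs \<union> {s}"
  have d1: "Bs \<inter> G ` Bs = {}" using Bs_s Gp by fastforce
  have d2: "(Bs \<union> G ` Bs) \<inter> {s} = {}" using Bs_s Gp by fastforce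
  have cardB': "card Bs' = 2 * card Bs + 1"
    unfolding Bs'_def using card_Un_disjoint[OF _ _ d2] card_Un_disjoint[OF fin _ d1] fin
      card_image[OF Ginj] by simp
  have pow: "(2::nat)^(Suc j) - 1 \<le> card Bs'"
  proof -
    have "(1::nat) \<le> 2^j" by simp
    thus ?thesis using cardB cardB' by simp
  qed
  have Cs: "Cst (Suc j) = Cn c b" by (simp add: c_def b_def)
  have bnd: "0 < D \<Longrightarrow> D \<le> 2*b \<Longrightarrow> 2*D + Cst (Suc j) D \<le> 9*16^(Suc j)" for D
  proof -
    assume "0 < D" "D \<le> 2*b"
    hence "Cn c b D \<le> 2*D + b" using Cn_bound[OF HH] by simp
    hence "2*D + Cst (Suc j) D \<le> 9*b" using \<open>D \<le> 2*b\<close> Cs by simp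
    thus ?thesis by (simp add: b_def)
  qed
  have EkS: "Ek j \<subseteq> Ek (Suc j)" using eout(9) .
  have na1: "\<not> aff (Ek (Suc j)) (X (Suc j)) d0" if d0: "d0 \<in> Bs" for d0
  proof
    assume a: "aff (Ek (Suc j)) (X (Suc j)) d0"
    define \<eta> where "\<eta> = min d0 (s - d0)"
    have ds: "0 < d0" "d0 < s" using Bs_s d0 by auto
    have eta: "\<eta> > 0" using ds by (simp add: \<eta>_def)
    have inj: "inj_on (Dl j) {l. \<bar>l - d0\<bar> < \<eta>}"
    proof (rule inj_onI)
      fix x y assume x: "x \<in> {l. \<bar>l - d0\<bar> < \<eta>}" and y: "y \<in> {l. \<bar>l - d0\<bar> < \<eta>}" and e: "Dl j x = Dl j y"
      have "0 \<le> x" "x \<le> s" "0 \<le> y" "y \<le> s" using x y by (auto simp: \<eta>_def abs_less_iff)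
      thus "x = y" using e del_lo[OF HH] Dld s_def by metis
    qed
    have "aff (Ek j) (X j) (Dl j d0)"
      by (rule transfer[OF a EkS _ phiaff_Dl eta inj]) (use X_inner in auto)
    moreover have "Dl j d0 = d0" using del_lo[OF HH] ds Dld s_def by simp
    ultimately show False using B d0 by auto
  qed
  have na2: "\<not> aff (Ek (Suc j)) (X (Suc j)) (G d0)" if d0: "d0 \<in> Bs" for d0
  proof
    assume a: "aff (Ek (Suc j)) (X (Suc j)) (G d0)"
    define \<eta> where "\<eta> = min (G d0 - s) (2*b - G d0)"
    have g: "s < G d0" "G d0 < 2*b" "del c b (G d0) = d0" using Gp d0 by auto
    have eta: "\<eta> > 0" using g by (simp add: \<eta>_def)
    have inj: "inj_on (Dl j) {l. \<bar>l - G d0\<bar> < \<eta>}"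
    proof (rule inj_onI)
      fix x y assume x: "x \<in> {l. \<bar>l - G d0\<bar> < \<eta>}" and y: "y \<in> {l. \<bar>l - G d0\<bar> < \<eta>}" and e: "Dl j x = Dl j y"
      have r: "s \<le> x" "x \<le> 2*b" "s \<le> y" "y \<le> 2*b" using x y by (auto simp: \<eta>_def abs_less_iff)
      show "x = y"
      proof (rule ccontr)
        assume "x \<noteq> y"
        hence "x < y \<or> y < x" by auto
        thus False using del_strict[OF HH] r e Dld s_def by (metis less_irrefl)
      qed
    qed
    have "aff (Ek j) (X j) (Dl j (G d0))"
      by (rule transfer[OF a EkS _ phiaff_Dl eta inj]) (use X_inner in auto)
    moreover have "Dl j (G d0) = d0" using g Dld by simp
    ultimately show False using B d0 by auto
  qed
  have na3: "\<not> aff (Ek (Suc j)) (X (Suc j)) s"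
  proof
    assume "aff (Ek (Suc j)) (X (Suc j)) s"
    then obtain \<epsilon> p q where e: "\<epsilon> > 0" and pq: "\<forall>l. \<bar>l - s\<bar> < \<epsilon> \<longrightarrow> (\<forall>e\<in>Ek (Suc j). X (Suc j) l e = p e + q e * l)"
      unfolding aff_def by blast
    obtain \<alpha> \<beta> where ab: "\<forall>l. \<bar>l - s\<bar> < \<epsilon> \<longrightarrow> Dl j l = \<alpha> + \<beta> * l"
      using phiaff_Dl[OF pq] by blast
    define \<eta> where "\<eta> = min \<epsilon> s / 2"
    have eta: "0 < \<eta>" "\<eta> < \<epsilon>" "\<eta> < s" using e sprop by (auto simp: \<eta>_def)
    have l1: "Dl j s = s" using del_lo[OF HH] sprop Dld s_def by simp
    have l2: "Dl j (s - \<eta>) = s - \<eta>" using del_lo[OF HH, of "s - \<eta>"] eta Dld s_def by simp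
    have a1: "\<alpha> + \<beta> * s = s" using ab l1 e by auto
    have a2: "\<alpha> + \<beta> * (s - \<eta>) = s - \<eta>" using ab l2 eta by auto
    have "\<beta> * \<eta> = \<eta>" using a1 a2 by (simp add: algebra_simps)
    hence b1: "\<beta> = 1" using eta by simp
    hence a0: "\<alpha> = 0" using a1 by simp
    define \<eta>3 where "\<eta>3 = min (\<epsilon>/2) ((2*b - s)/2)"
    have e3': "\<eta>3 \<le> (2*b - s)/2" unfolding \<eta>3_def by (rule min.cobounded2)
    have e3: "0 < \<eta>3" "\<eta>3 < \<epsilon>" "s + \<eta>3 \<le> 2*b" using e s2b e3' by (auto simp: \<eta>3_def)
    have "Dl j (s + \<eta>3) = s + \<eta>3" using ab e3 b1 a0 by auto
    moreover have "Dl j (s + \<eta>3) < Dl j s" using del_strict[OF HH, of s "s + \<eta>3"] e3 Dld s_def by simp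
    ultimately show False using l1 e3 by simp
  qed
  show ?case
  proof (intro exI[of _ Bs'] conjI ballI)
    show "finite Bs'" using fin by (simp add: Bs'_def)
    show "2 ^ Suc j - 1 \<le> card Bs'" using pow .
    fix D assume D: "D \<in> Bs'"
    have pos: "0 < D \<and> D \<le> 2*b" using D Bs_s Gp sprop s2b unfolding Bs'_def by fastforce
    show "0 < D" using pos by simp
    show "2 * D + Cst (Suc j) D \<le> 9 * 16 ^ Suc j" using bnd pos by simp
    show "\<not> aff (Ek (Suc j)) (X (Suc j)) D" using D na1 na2 na3 unfolding Bs'_def by blast
  qed
qed



context
  fixes c :: "real \<Rightarrow> real" and Dt :: real
  assumes c0: "c 0 = 0" and mono: "\<forall>x y. 0 \<le> x \<longrightarrow> x \<le> y \<longrightarrow> c x \<le> c y"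
    and cont: "continuous_on {0..} c" and Dtpos: "Dt > 0"
begin

lemma dl_prop: "l < Dt \<Longrightarrow> 0 \<le> dlam c Dt l \<and> 2 * dlam c Dt l + c (dlam c Dt l) = Dt - l"
proof -
  assume l: "l < Dt"
  have "0 \<le> (THE d. 0 \<le> d \<and> 2*d + c d = Dt - l) \<and> 2 * (THE d. 0 \<le> d \<and> 2*d + c d = Dt - l) + c (THE d. 0 \<le> d \<and> 2*d + c d = Dt - l) = Dt - l"
    apply (rule solve_mono[OF cont2[OF c0 mono cont Dtpos] sm2[OF c0 mono cont Dtpos], of _ "Dt - l"])
    using c0 l cnn[OF c0 mono cont Dtpos, of "Dt - l"] by auto
  thus ?thesis using l by (simp add: dlam_def)
qed

lemma dl_hi: "Dt \<le> l \<Longrightarrow> dlam c Dt l = 0"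
  by (simp add: dlam_def)

lemma dl_pos: "0 < l \<Longrightarrow> l < Dt \<Longrightarrow> 0 < dlam c Dt l \<and> 2 * dlam c Dt l < Dt"
proof -
  assume l: "0 < l" "l < Dt"
  have p: "0 \<le> dlam c Dt l" "2 * dlam c Dt l + c (dlam c Dt l) = Dt - l" using dl_prop l by auto
  have cc: "0 \<le> c (dlam c Dt l)" using cnn[OF c0 mono cont Dtpos] p by simp
  have "dlam c Dt l \<noteq> 0" using p c0 l by auto
  thus ?thesis using p cc l by auto
qed

lemma dl_range: "0 < l \<Longrightarrow> 0 \<le> dlam c Dt l \<and> dlam c Dt l \<le> Dt"
proof (cases "l < Dt")
  case True
  assume "0 < l"
  thus ?thesis using dl_pos[of l] True by auto
next
  case False thus ?thesis using dl_hi Dtpos by simp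
qed

lemma dl_at: "0 < d0 \<Longrightarrow> 2*d0 + c d0 < Dt \<Longrightarrow>
   0 < Dt - 2*d0 - c d0 \<and> Dt - 2*d0 - c d0 < Dt \<and> dlam c Dt (Dt - 2*d0 - c d0) = d0"
proof -
  assume d: "0 < d0" "2*d0 + c d0 < Dt"
  have cc: "0 \<le> c d0" using cnn[OF c0 mono cont Dtpos] d by simp
  define l where "l = Dt - 2*d0 - c d0"
  have l: "0 < l" "l < Dt" using d cc by (auto simp: l_def)
  have p: "0 \<le> dlam c Dt l" "2 * dlam c Dt l + c (dlam c Dt l) = Dt - l" using dl_prop l by auto
  have "dlam c Dt l = d0"
    apply (rule solve_unique[OF sm2[OF c0 mono cont Dtpos]])
    using p d by (auto simp: l_def)
  thus ?thesis using l l_def by simp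
qed

lemma dl_inj: "inj_on (dlam c Dt) {l. 0 < l \<and> l < Dt}"
proof (rule inj_onI)
  fix x y assume x: "x \<in> {l. 0 < l \<and> l < Dt}" and y: "y \<in> {l. 0 < l \<and> l < Dt}" and e: "dlam c Dt x = dlam c Dt y"
  have xx: "x < Dt" "y < Dt" using x y by auto
  have h1: "2 * dlam c Dt x + c (dlam c Dt x) = Dt - x" using dl_prop xx(1) by blast
  have h2: "2 * dlam c Dt y + c (dlam c Dt y) = Dt - y" using dl_prop xx(2) by blast
  show "x = y" using h1 h2 e by (metis cancel_comm_monoid_add_class.diff_cancel diff_diff_eq2 diff_eq_diff_eq)
qed

lemma hmap_inj: "inj_on (\<lambda>d. Dt - 2*d - c d) {0..}"
proof (rule inj_onI)
  fix x y assume "x \<in> {0..}" "y \<in> {0..}" "Dt - 2*x - c x = Dt - 2*y - c y"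
  thus "x = y" using solve_unique[OF sm2[OF c0 mono cont Dtpos], of x y] by simp
qed

end

definition DtK :: "nat \<Rightarrow> real" where "DtK K = 9*16^K + 1"
definition ea :: "nat \<Rightarrow> nat" where "ea K = 4*K+1"
definition eb :: "nat \<Rightarrow> nat" where "eb K = 4*K+2"
definition sg :: "nat \<Rightarrow> nat" where "sg K = 2*K+2"

lemma fin_facts: "ea K \<notin> Ek K" "eb K \<notin> Ek K" "ea K \<noteq> eb K" "eb K \<noteq> ea K" "sg K \<notin> Vk K"
  "sg K \<noteq> srcv K" "sg K \<noteq> snkv K" "srcv K \<noteq> sg K" "snkv K \<noteq> sg K"
  by (auto simp: ea_def eb_def sg_def Ek_def Vk_def srcv_def snkv_def)

definition netK :: "nat \<Rightarrow> network" where
  "netK K = \<lparr>verts = Vk K \<union> {sg K}, edges = Ek K \<union> {ea K, eb K},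
     etail = (\<lambda>e. if e \<in> Ek K then gtl e else sg K),
     ehead = (\<lambda>e. if e \<in> Ek K then ghd e else if e = ea K then srcv K else snkv K),
     src = sg K, snk = snkv K, dem = DtK K,
     ta = (\<lambda>e. if e \<in> Ek K then gta e else 1),
     tb = (\<lambda>e. if e \<in> Ek K then gtb e else 0),
     gf = (\<lambda>e. if e = ea K then 1 else 0)\<rparr>"

definition xfin :: "nat \<Rightarrow> real \<Rightarrow> nat \<Rightarrow> real" where
  "xfin K l e = (let d = dlam (Cst K) (DtK K) l in
     if e = ea K then d else if e = eb K then DtK K - d else X K d e)"

lemma DtK_pos: "0 < DtK K"
proof -
  have "(0::real) < 9*16^K" by simp
  thus ?thesis unfolding DtK_def by linarith
qed

lemma valid: "valid_network (netK K)"
proof -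
  have a: "\<forall>e\<in>Ek K \<union> {ea K, eb K}. (if e \<in> Ek K then gtl e else sg K) \<in> Vk K \<union> {sg K} \<and>
      (if e \<in> Ek K then ghd e else if e = ea K then srcv K else snkv K) \<in> Vk K \<union> {sg K}"
    using g_range vin(1,2) by auto
  have b: "\<forall>e\<in>Ek K \<union> {ea K, eb K}. 0 \<le> (if e \<in> Ek K then gta e else 1) \<and>
      0 \<le> (if e \<in> Ek K then gtb e else (0::real)) \<and> 0 \<le> (if e = ea K then 1 else (0::real))"
    using g_pos less_imp_le by auto
  have c: "finite (Vk K \<union> {sg K})" "finite (Ek K \<union> {ea K, eb K})" by (auto simp: Vk_def Ek_def)
  show ?thesis unfolding valid_network_def netK_def
    using a b c vin(2) fin_facts(7) DtK_pos by simp
qed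

lemma ta_pos: "\<forall>e\<in>edges (netK K). ta (netK K) e > 0"
  by (simp add: netK_def g_pos)

lemma card_verts: "card (verts (netK K)) = 2*K+3"
proof -
  have "card (Vk K) = 2*K+2" by (simp add: Vk_def)
  thus ?thesis using fin_facts(5) by (simp add: netK_def Vk_def)
qed

lemma card_edges: "card (edges (netK K)) = 4*K+3"
proof -
  have "card (Ek K) = 4*K+1" by (simp add: Ek_def)
  thus ?thesis using fin_facts(1,2,3) by (simp add: netK_def Ek_def)
qed


lemma netK_simps: "etail (netK K) e = (if e \<in> Ek K then gtl e else sg K)"
  "ehead (netK K) e = (if e \<in> Ek K then ghd e else if e = ea K then srcv K else snkv K)"
  "src (netK K) = sg K" "snk (netK K) = snkv K" "edges (netK K) = Ek K \<union> {ea K, eb K}"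
  "dem (netK K) = DtK K" "verts (netK K) = Vk K \<union> {sg K}"
  by (simp_all add: netK_def)

lemma ecost_in: "e \<in> Ek K \<Longrightarrow> edge_cost (netK K) l x e = gta e * x e + gtb e"
  using fin_facts(1) by (auto simp: edge_cost_def netK_def)
lemma ecost_a: "edge_cost (netK K) l x (ea K) = x (ea K) + l"
  using fin_facts(1) by (simp add: edge_cost_def netK_def)
lemma ecost_b: "edge_cost (netK K) l x (eb K) = x (eb K)"
  using fin_facts(2,4) by (simp add: edge_cost_def netK_def)

lemma st1: "is_st_path (netK K) [eb K]"
  unfolding is_st_path_def using fin_facts by (simp add: netK_simps)

lemma st2: "q \<in> Pth K \<Longrightarrow> is_st_path (netK K) (ea K # q)"
proof -
  assume q: "q \<in> Pth K"
  have ok: "pathok K q" using Pth_ok q .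
  hence qne: "q \<noteq> []" and qs: "set q \<subseteq> Ek K" and qh: "gtl (hd q) = srcv K"
      and ql: "ghd (last q) = snkv K" and qsu: "successively (\<lambda>a b. ghd a = gtl b) q"
      and qd: "distinct (gtl (hd q) # map ghd q)" and qv: "set (map ghd q) \<subseteq> Vk K"
    unfolding pathok_def by auto
  let ?N = "netK K"
  have hdq: "hd q \<in> Ek K" using qne qs by auto
  have lq: "last q \<in> Ek K" using qne qs by auto
  have mq: "map (ehead ?N) q = map ghd q" using qs by (auto simp: netK_simps)
  have s1: "successively (\<lambda>a b. ehead ?N a = etail ?N b) q"
    apply (rule successively_mono[OF qsu]) using qs by (auto simp: netK_simps)
  have s2: "successively (\<lambda>a b. ehead ?N a = etail ?N b) (ea K # q)"
    using s1 qne hdq qh fin_facts(1) by (simp add: successively_Cons netK_simps)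
  have d: "distinct (sg K # srcv K # map ghd q)"
  proof -
    have "sg K \<notin> ghd ` set q" using qv fin_facts(5) by auto
    thus ?thesis using qd qh fin_facts(6) by auto
  qed
  have eh: "ehead ?N (ea K) = srcv K" "etail ?N (ea K) = sg K" using fin_facts(1) by (simp_all add: netK_simps)
  have dd: "distinct (etail ?N (hd (ea K # q)) # map (ehead ?N) (ea K # q))"
  proof -
    have "etail ?N (hd (ea K # q)) # map (ehead ?N) (ea K # q) = sg K # srcv K # map ghd q"
      by (simp only: list.sel(1) list.map(2) mq eh)
    thus ?thesis using d by (simp only:)
  qed
  have ch: "\<forall>i. Suc i < length (ea K # q) \<longrightarrow> ehead ?N ((ea K # q) ! i) = etail ?N ((ea K # q) ! Suc i)"
    using s2 unfolding successively_conv_nth by blast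
  have lst: "ehead ?N (last (ea K # q)) = snk ?N" using qne lq ql by (simp add: netK_simps)
  have st: "set (ea K # q) \<subseteq> edges ?N" using qs by (auto simp: netK_simps)
  show ?thesis unfolding is_st_path_def using dd ch lst st eh by (simp add: netK_simps)
qed


lemma HK: "Cst K 0 = 0" "\<forall>x y. 0 \<le> x \<longrightarrow> x \<le> y \<longrightarrow> Cst K x \<le> Cst K y"
  "continuous_on {0..} (Cst K)" "0 < DtK K"
  using H[of K] DtK_pos by auto

lemma xfin_in: "e \<in> Ek K \<Longrightarrow> xfin K l e = X K (dlam (Cst K) (DtK K) l) e"
  using fin_facts(1,2) by (auto simp: xfin_def Let_def)
lemma xfin_a: "xfin K l (ea K) = dlam (Cst K) (DtK K) l"
  by (simp add: xfin_def)
lemma xfin_b: "xfin K l (eb K) = DtK K - dlam (Cst K) (DtK K) l"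
  using fin_facts(4) by (simp add: xfin_def)

lemma eq_fin: "0 < l \<Longrightarrow> wardrop_eq (netK K) l (xfin K l)"
proof -
  assume l: "0 < l"
  define c where "c = Cst K"
  define Dt where "Dt = DtK K"
  define d where "d = dlam c Dt l"
  note HH = HK[of K, folded c_def Dt_def]
  have dr: "0 \<le> d" "d \<le> Dt" using dl_range[OF HH l] d_def by auto
  let ?N = "netK K"
  define P where "P = insert [eb K] ((#) (ea K) ` Pth K)"
  define f where "f = (\<lambda>p. if p = [eb K] then Dt - d else if p \<noteq> [] \<and> hd p = ea K then F K d (tl p) else 0)"
  define pt where "pt = (\<lambda>y. if y = sg K then 0 else if y = srcv K then d + l else if l < Dt then d + l + Pi K d y else Dt)"
  have FI: "(\<forall>p. 0 \<le> F K d p) \<and> (\<forall>p. F K d p \<noteq> 0 \<longrightarrow> p \<in> Pth K) \<and>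
   sum (F K d) (Pth K) = d \<and> (\<forall>e. X K d e = (\<Sum>p\<in>Pth K. if e \<in> set p then F K d p else 0))"
    using flow_inv[OF dr(1)] .
  have PI: "Pi K d (srcv K) = 0 \<and> Pi K d (snkv K) = Cst K d \<and>
   (\<forall>e\<in>Ek K. Pi K d (ghd e) \<le> Pi K d (gtl e) + gta e * X K d e + gtb e) \<and>
   (\<forall>e\<in>Ek K. 0 < X K d e \<longrightarrow> Pi K d (ghd e) = Pi K d (gtl e) + gta e * X K d e + gtb e)"
    using pot_inv[OF dr(1)] .
  have xa: "xfin K l (ea K) = d" using xfin_a d_def c_def Dt_def by simp
  have xb: "xfin K l (eb K) = Dt - d" using xfin_b d_def c_def Dt_def by simp
  have xi: "\<And>e. e \<in> Ek K \<Longrightarrow> xfin K l e = X K d e" using xfin_in d_def c_def Dt_def by simp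
  have xo: "\<And>e. e \<notin> Ek K \<Longrightarrow> e \<noteq> ea K \<Longrightarrow> e \<noteq> eb K \<Longrightarrow> xfin K l e = 0"
    using X_out[OF dr(1)] by (simp add: xfin_def Let_def d_def c_def Dt_def)
  have finP: "finite P" using Pth_fin by (simp add: P_def)
  have PS: "P \<subseteq> st_paths ?N" using st1 st2 by (auto simp: P_def st_paths_def)
  have nb: "[eb K] \<notin> (#) (ea K) ` Pth K" using fin_facts(4) by auto
  have fC: "\<And>q. f (ea K # q) = F K d q" using fin_facts(3) by (simp add: f_def)
  have fB: "f [eb K] = Dt - d" by (simp add: f_def)
  have f0: "\<forall>p. p \<notin> P \<longrightarrow> f p = 0"
  proof (intro allI impI)
    fix p assume p: "p \<notin> P"
    show "f p = 0"
    proof (rule ccontr)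
      assume nz: "f p \<noteq> 0"
      have pb: "p \<noteq> [eb K]" using p by (auto simp: P_def)
      hence c1: "p \<noteq> [] \<and> hd p = ea K" and c2: "F K d (tl p) \<noteq> 0" using nz by (auto simp: f_def split: if_splits)
      have "tl p \<in> Pth K" using FI c2 by blast
      moreover have "p = ea K # tl p" using c1 by (cases p) auto
      ultimately have "p \<in> P" unfolding P_def by (metis image_eqI insertI2)
      thus False using p by simp
    qed
  qed
  have fnn: "\<forall>p. 0 \<le> f p" using FI dr by (simp add: f_def)
  have injC: "inj_on ((#) (ea K)) (Pth K)" by (rule inj_onI) simp
  have sumP: "\<And>g. (\<Sum>p\<in>P. g p) = g [eb K] + (\<Sum>q\<in>Pth K. g (ea K # q))"
    using nb Pth_fin by (simp add: P_def sum.reindex[OF injC])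
  have fs: "sum f P = dem ?N"
    using sumP[of f] fC fB FI by (simp add: netK_simps Dt_def)
  have xf: "\<forall>e. xfin K l e = (\<Sum>p\<in>P. if e \<in> set p then f p else 0)"
  proof
    fix e
    have qs: "\<forall>q\<in>Pth K. set q \<subseteq> Ek K" using Pth_ok by (auto simp: pathok_def)
    have R: "(\<Sum>p\<in>P. if e \<in> set p then f p else 0) =
        (if e = eb K then Dt - d else 0) + (\<Sum>q\<in>Pth K. if e = ea K \<or> e \<in> set q then F K d q else 0)"
      unfolding sumP fC fB by simp
    show "xfin K l e = (\<Sum>p\<in>P. if e \<in> set p then f p else 0)"
    proof (cases "e = ea K")
      case True
      thus ?thesis using R xa FI fin_facts(3) by simp
    next
      case False
      hence R2: "(\<Sum>p\<in>P. if e \<in> set p then f p else 0) =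
        (if e = eb K then Dt - d else 0) + (\<Sum>q\<in>Pth K. if e \<in> set q then F K d q else 0)"
        using R by simp
      show ?thesis
      proof (cases "e = eb K")
        case True
        have "(\<Sum>q\<in>Pth K. if e \<in> set q then F K d q else 0) = 0"
          using qs True fin_facts(2) by (intro sum.neutral) auto
        thus ?thesis using R2 True xb by simp
      next
        case False2: False
        show ?thesis
        proof (cases "e \<in> Ek K")
          case True
          thus ?thesis using R2 False2 xi FI by simp
        next
          case False3: False
          have "(\<Sum>q\<in>Pth K. if e \<in> set q then F K d q else 0) = 0"
            using qs False3 by (intro sum.neutral) auto
          thus ?thesis using R2 False False2 False3 xo by simp
        qed
      qed
    qed
  qed
  have ptv: "pt (sg K) = 0" "pt (srcv K) = d + l" "pt (snkv K) = (if l < Dt then Dt - d else Dt)"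
  proof -
    show "pt (sg K) = 0" by (simp add: pt_def)
    show "pt (srcv K) = d + l" using fin_facts(8) by (simp add: pt_def)
    have "l < Dt \<Longrightarrow> 2 * d + c d = Dt - l" using dl_prop[OF HH] d_def by simp
    thus "pt (snkv K) = (if l < Dt then Dt - d else Dt)"
      using fin_facts(9) vdistinct(7) PI c_def by (auto simp: pt_def)
  qed
  have ptin: "\<And>y. y \<in> Vk K \<Longrightarrow> l < Dt \<Longrightarrow> pt y = d + l + Pi K d y"
    using fin_facts(5) PI by (auto simp: pt_def)
  have d0: "Dt \<le> l \<Longrightarrow> d = 0" using dl_hi[OF HH] d_def by simp
  have ptout: "\<And>y. y \<in> Vk K \<Longrightarrow> y \<noteq> srcv K \<Longrightarrow> \<not> l < Dt \<Longrightarrow> pt y = Dt"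
    using fin_facts(5) by (auto simp: pt_def)
  have ptge: "\<And>y. y \<in> Vk K \<Longrightarrow> \<not> l < Dt \<Longrightarrow> Dt \<le> pt y"
    using ptout ptv(2) d0 by (metis add_0 linorder_not_less order_refl)
  have ET: "\<forall>e\<in>edges ?N. pt (ehead ?N e) \<le> pt (etail ?N e) + edge_cost ?N l (xfin K l) e \<and>
        (xfin K l e > 0 \<longrightarrow> pt (ehead ?N e) = pt (etail ?N e) + edge_cost ?N l (xfin K l) e)"
  proof
    fix e assume e: "e \<in> edges ?N"
    hence "e \<in> Ek K \<or> e = ea K \<or> e = eb K" by (auto simp add: netK_simps)
    thus "pt (ehead ?N e) \<le> pt (etail ?N e) + edge_cost ?N l (xfin K l) e \<and>
        (xfin K l e > 0 \<longrightarrow> pt (ehead ?N e) = pt (etail ?N e) + edge_cost ?N l (xfin K l) e)"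
    proof (elim disjE)
      assume eK: "e \<in> Ek K"
      have ht: "ehead ?N e = ghd e" "etail ?N e = gtl e" using eK by (simp_all add: netK_simps)
      have co: "edge_cost ?N l (xfin K l) e = gta e * X K d e + gtb e" using ecost_in[OF eK] xi[OF eK] by simp
      have gr: "gtl e \<in> Vk K" "ghd e \<in> Vk K" "ghd e \<noteq> srcv K" using g_range[OF eK] by auto
      show ?thesis
      proof (cases "l < Dt")
        case True
        thus ?thesis using ht co ptin[OF gr(1) True] ptin[OF gr(2) True] PI eK xi[OF eK] by auto
      next
        case False
        have "d = 0" using d0 False by simp
        hence X0: "X K d e = 0" using X_zero by simp
        have "pt (ghd e) = Dt" using ptout[OF gr(2) gr(3) False] .
        moreover have "Dt \<le> pt (gtl e)" using ptge[OF gr(1) False] .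
        ultimately show ?thesis using ht co X0 xi[OF eK] g_pos(2)[of e] by simp
      qed
    next
      assume ea: "e = ea K"
      have ht: "ehead ?N e = srcv K" "etail ?N e = sg K" using ea fin_facts(1) by (simp_all add: netK_simps)
      show ?thesis using ht ptv ecost_a xa ea by simp
    next
      assume eb: "e = eb K"
      have ht: "ehead ?N e = snkv K" "etail ?N e = sg K" using eb fin_facts(2,4) by (simp_all add: netK_simps)
      show ?thesis using ht ptv ecost_b xb eb d0 by auto
    qed
  qed
  show ?thesis
    apply (rule certificate[OF valid finP PS f0 fnn fs xf])
    using ET by auto
qed


lemma bp_fin: "\<exists>B. finite B \<and> 2^K - 1 \<le> card B \<and> (\<forall>l\<in>B. breakpoint (netK K) (xfin K) l)"
proof -
  obtain Bs where fin: "finite Bs" and cardB: "2^K - 1 \<le> card Bs"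
    and B: "\<forall>d0\<in>Bs. 0 < d0 \<and> 2*d0 + Cst K d0 \<le> 9*16^K \<and> \<not> aff (Ek K) (X K) d0"
    using bp_inv by blast
  define c where "c = Cst K"
  define Dt where "Dt = DtK K"
  note HH = HK[of K, folded c_def Dt_def]
  define h where "h = (\<lambda>d. Dt - 2*d - c d)"
  have lt: "\<And>d0. d0 \<in> Bs \<Longrightarrow> 0 < d0 \<and> 2*d0 + c d0 < Dt"
  proof -
    fix d0 assume "d0 \<in> Bs"
    hence "0 < d0" "2*d0 + c d0 \<le> 9*16^K" using B c_def by auto
    thus "0 < d0 \<and> 2*d0 + c d0 < Dt" by (simp add: Dt_def DtK_def)
  qed
  have hp: "\<And>d0. d0 \<in> Bs \<Longrightarrow> 0 < h d0 \<and> h d0 < Dt \<and> dlam c Dt (h d0) = d0"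
    using dl_at[OF HH] lt h_def by blast
  have hinj: "inj_on h Bs"
    using inj_on_subset[OF hmap_inj[OF HH]] lt h_def by (metis atLeast_iff less_eq_real_def subsetI)
  have EK: "Ek K \<subseteq> edges (netK K)" by (auto simp: netK_simps)
  have eaE: "ea K \<in> edges (netK K)" by (simp add: netK_simps)
  have nb: "breakpoint (netK K) (xfin K) (h d0)" if d0: "d0 \<in> Bs" for d0
    unfolding breakpoint_aff
  proof
    have g: "0 < h d0" "h d0 < Dt" "dlam c Dt (h d0) = d0" using hp d0 by auto
    show "0 < h d0" using g by simp
    show "\<not> aff (edges (netK K)) (xfin K) (h d0)"
    proof
      assume a: "aff (edges (netK K)) (xfin K) (h d0)"
      define \<eta> where "\<eta> = min (h d0) (Dt - h d0)"
      have eta: "\<eta> > 0" using g by (simp add: \<eta>_def)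
      have sub: "{l. \<bar>l - h d0\<bar> < \<eta>} \<subseteq> {l. 0 < l \<and> l < Dt}" by (auto simp: \<eta>_def abs_less_iff)
      have inj: "inj_on (dlam c Dt) {l. \<bar>l - h d0\<bar> < \<eta>}" using inj_on_subset[OF dl_inj[OF HH] sub] .
      have rel: "\<forall>l. \<bar>l - h d0\<bar> < \<eta> \<longrightarrow> (\<forall>e\<in>Ek K. xfin K l e = X K (dlam c Dt l) e)"
        using xfin_in c_def Dt_def by simp
      have phiaff: "\<exists>\<alpha> \<beta>. \<forall>l. \<bar>l - h d0\<bar> < \<epsilon> \<longrightarrow> dlam c Dt l = \<alpha> + \<beta> * l"
        if pq: "\<forall>l. \<bar>l - h d0\<bar> < \<epsilon> \<longrightarrow> (\<forall>e\<in>edges (netK K). xfin K l e = p e + q e * l)" for \<epsilon> p q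
      proof (intro exI allI impI)
        fix l assume "\<bar>l - h d0\<bar> < \<epsilon>"
        thus "dlam c Dt l = p (ea K) + q (ea K) * l" using pq eaE xfin_a c_def Dt_def by metis
      qed
      have "aff (Ek K) (X K) (dlam c Dt (h d0))"
        by (rule transfer[OF a EK rel phiaff eta inj])
      thus False using g B d0 by auto
    qed
  qed
  show ?thesis
  proof (intro exI[of _ "h ` Bs"] conjI ballI)
    show "finite (h ` Bs)" using fin by simp
    show "2 ^ K - 1 \<le> card (h ` Bs)" using cardB card_image[OF hinj] by simp
    fix l assume "l \<in> h ` Bs"
    thus "breakpoint (netK K) (xfin K) l" using nb by blast
  qed
qed

theorem lemma5p6:
  shows "\<exists>C::nat. \<forall>k::nat. \<exists>(N::network) (x :: real \<Rightarrow> nat \<Rightarrow> real).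
     valid_network N \<and>
     card (verts N) \<le> C * (k + 1) \<and> card (edges N) \<le> C * (k + 1) \<and>
     (\<forall>lam>0. wardrop_eq N lam (x lam) \<and>
        (\<forall>y. wardrop_eq N lam y \<longrightarrow> (\<forall>e\<in>edges N. y e = x lam e))) \<and>
     (\<exists>B. finite B \<and> card B \<ge> 2 ^ (k + 1) \<and> (\<forall>l\<in>B. breakpoint N x l))"
proof (intro exI[of _ 11] allI)
  fix k :: nat
  define K where "K = k + 2"
  have cv: "card (verts (netK K)) \<le> 11 * (k + 1)" using card_verts[of K] by (simp add: K_def)
  have ce: "card (edges (netK K)) \<le> 11 * (k + 1)" using card_edges[of K] by (simp add: K_def)
  have eq: "\<forall>lam>0. wardrop_eq (netK K) lam (xfin K lam) \<and>
        (\<forall>y. wardrop_eq (netK K) lam y \<longrightarrow> (\<forall>e\<in>edges (netK K). y e = xfin K lam e))"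
    using eq_fin wardrop_unique[OF valid ta_pos] by blast
  obtain B where B: "finite B" "2^K - 1 \<le> card B" "\<forall>l\<in>B. breakpoint (netK K) (xfin K) l"
    using bp_fin by blast
  have "(2::nat) ^ (k + 1) \<le> 2^K - 1"
  proof -
    have "(2::nat)^K = 2 * 2^(k+1)" by (simp add: K_def)
    moreover have "(1::nat) \<le> 2^(k+1)" by simp
    ultimately show ?thesis by simp
  qed
  hence "2 ^ (k + 1) \<le> card B" using B(2) by linarith
  thus "\<exists>(N::network) (x :: real \<Rightarrow> nat \<Rightarrow> real).
     valid_network N \<and>
     card (verts N) \<le> 11 * (k + 1) \<and> card (edges N) \<le> 11 * (k + 1) \<and>
     (\<forall>lam>0. wardrop_eq N lam (x lam) \<and>
        (\<forall>y. wardrop_eq N lam y \<longrightarrow> (\<forall>e\<in>edges N. y e = x lam e))) \<and>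
     (\<exists>B. finite B \<and> card B \<ge> 2 ^ (k + 1) \<and> (\<forall>l\<in>B. breakpoint N x l))"
    using valid cv ce eq B by blast
qed

end
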